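(* Consider a finite game with player set $\mathcal{D}$, finite action sets $X_i$ ($i\in\mathcal{D}$), action space $X=\prod_{i\in\mathcal{D}}X_i$, and random utilities whose expectations $U_i:X\to\mathbb{R}$ make $\{\mathcal{D},\{X_i\},\{U_i\}\}$ an exact potential game with potential $\phi:X\to\mathbb{R}$ (utilities normalized by the maximum potential). Run the Binary Log-linear Learning Algorithm (BLLA), described in the context, with fixed temperature $\tau>0$ and $N$ estimation samples per utility estimate. Then the stochastically stable states of BLLA are the global maximizers of $\phi$ if one of the following holds: (1) the estimation noise is bounded in an interval of length $\ell$ and, for some $0<\xi<1$, the number of samples satisfies $$N\ \ge\ \Big(\log\big(\tfrac{4}{\xi}\big)+\tfrac{2}{\tau}\Big)\frac{\ell^2}{2(1-\xi)^2\tau^2};$$ (2) the estimation noise is unbounded with finite mean and variance, its moment generating function $M(\theta)$ is finite, $\theta^*=\arg\max_{\theta}\big(\theta(1-\xi)\tau-\log M(\theta)\big)$ for some $0<\xi<1$, and $$N\ \ge\ \frac{\log\big(\tfrac{4}{\xi}\big)+\tfrac{2}{\tau}}{\log\Big(\frac{e^{\theta^*(1-\xi)\tau}}{M(\theta^* )}\Big)}.$$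
   Context: A potential game: $U_i(a_i,a_{-i})-U_i(a_i',a_{-i})=\phi(a_i,a_{-i})-\phi(a_i',a_{-i})$ for all $i$, $a_i,a_i'\in X_i$, $a_{-i}\in X_{-i}$. Utilities are only observed through noisy samples: for a profile $a$ and player $i$, independent samples $\hat U_{i,k}(a)$, $k=1,\dots,N$, with $\mathbb{E}[\hat U_{i,k}(a)]=U_i(a)$, and the estimate is the sample mean $\hat U^N_i(a)=\frac1N\sum_{k=1}^N\hat U_{i,k}(a)$. The "estimation noise" is the per-sample error $\hat U_{i,k}(a)-\hat U_{i,k}(b)-(U_i(a)-U_i(b))$ of the estimated utility difference between two profiles $a,b$ that differ only in player $i$'s action. All utilities are normalized by the maximum value of the potential. BLLA: start from an arbitrary profile; at each step $t$, a player $i$ and a trial action $\hat a_i\in X_i$ are selected uniformly at random; the estimates $\hat U^N_i(a(t-1))$ and $\hat U^N_i(\hat a_i,a_{-i}(t-1))$ are computed from $N$ fresh samples each; with $\Delta^N_i=\hat U^N_i(a(t-1))-\hat U^N_i(\hat a_i,a_{-i}(t-1))$, player $i$ switches to $\hat a_i$ with probability $(1+e^{\Delta^N_i/\tau})^{-1}$ and otherwise keeps $a_i(t-1)$; all other players keep their actions. For fixed $\tau$ (and $N=N(\tau)$ chosen as in the claim) this defines an irreducible Markov chain on $X$ with stationary distribution $\pi^\tau$; a state $a$ is stochastically stable if $\lim_{\tau\to0^+}\pi^\tau(a)>0$. $\log$ is the natural logarithm. *)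

theory Defs
  imports "HOL-Probability.Probability"
begin

text \<open>Action profiles: players are the elements of a finite type 'p,
 player i's action set is Xs i.\<close>
definition profiles :: "('p \<Rightarrow> 'b set) \<Rightarrow> ('p \<Rightarrow> 'b) set" where
  "profiles Xs = Pi\<^sub>E UNIV Xs"

definition is_potential_game ::
  "('p \<Rightarrow> 'b set) \<Rightarrow> ('p \<Rightarrow> ('p \<Rightarrow> 'b) \<Rightarrow> real) \<Rightarrow> (('p \<Rightarrow> 'b) \<Rightarrow> real) \<Rightarrow> bool" where
  "is_potential_game Xs U phi \<longleftrightarrow>
     (\<forall>i. \<forall>a\<in>profiles Xs. \<forall>x\<in>Xs i. \<forall>x'\<in>Xs i.
        U i (a(i := x)) - U i (a(i := x')) = phi (a(i := x)) - phi (a(i := x')))"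

text \<open>S i a is the distribution (a probability measure on the reals) of a single
 noisy utility sample of player i at profile a.\<close>
definition noise_dist ::
  "('p \<Rightarrow> ('p \<Rightarrow> 'b) \<Rightarrow> real measure) \<Rightarrow> ('p \<Rightarrow> ('p \<Rightarrow> 'b) \<Rightarrow> real)
     \<Rightarrow> 'p \<Rightarrow> ('p \<Rightarrow> 'b) \<Rightarrow> ('p \<Rightarrow> 'b) \<Rightarrow> real measure" where
  "noise_dist S U i a b =
     distr (S i a \<Otimes>\<^sub>M S i b) borel (\<lambda>(y, z). y - z - (U i a - U i b))"

text \<open>Probability that player i switches from the current profile a to the trial
 profile b, when both utilities are estimated by sample means of N fresh
 independent samples: the expectation of (1 + exp(Delta^N/tau))^(-1).\<close>
definition switch_prob ::
  "('p \<Rightarrow> ('p \<Rightarrow> 'b) \<Rightarrow> real measure) \<Rightarrow> real \<Rightarrow> nat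
     \<Rightarrow> 'p \<Rightarrow> ('p \<Rightarrow> 'b) \<Rightarrow> ('p \<Rightarrow> 'b) \<Rightarrow> real" where
  "switch_prob S tau N i a b =
     (\<integral>\<omega>. 1 / (1 + exp (((\<Sum>k<N. fst \<omega> k) / real N - (\<Sum>k<N. snd \<omega> k) / real N) / tau))
        \<partial>(PiM {..<N} (\<lambda>_. S i a) \<Otimes>\<^sub>M PiM {..<N} (\<lambda>_. S i b)))"

definition blla_trans ::
  "('p::finite \<Rightarrow> 'b set) \<Rightarrow> ('p \<Rightarrow> ('p \<Rightarrow> 'b) \<Rightarrow> real measure) \<Rightarrow> real \<Rightarrow> nat
     \<Rightarrow> ('p \<Rightarrow> 'b) \<Rightarrow> ('p \<Rightarrow> 'b) \<Rightarrow> real" where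
  "blla_trans Xs S tau N a b =
     (\<Sum>i\<in>UNIV. (1 / real CARD('p)) *
        (\<Sum>x\<in>Xs i. (1 / real (card (Xs i))) *
           ((if a(i := x) = b then switch_prob S tau N i a (a(i := x)) else 0)
          + (if a = b then 1 - switch_prob S tau N i a (a(i := x)) else 0))))"

definition stationary_dist ::
  "'s set \<Rightarrow> ('s \<Rightarrow> 's \<Rightarrow> real) \<Rightarrow> ('s \<Rightarrow> real) \<Rightarrow> bool" where
  "stationary_dist X P p \<longleftrightarrow>
     (\<forall>a\<in>X. 0 \<le> p a) \<and> (\<Sum>a\<in>X. p a) = 1 \<and>
     (\<forall>b\<in>X. (\<Sum>a\<in>X. p a * P a b) = p b)"

definition stoch_stable :: "(real \<Rightarrow> 's \<Rightarrow> real) \<Rightarrow> 's \<Rightarrow> bool" where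
  "stoch_stable pis a \<longleftrightarrow> (\<exists>L>0. ((\<lambda>tau. pis tau a) \<longlongrightarrow> L) (at_right 0))"

end

theory Submission
  imports Defs
begin

definition edgs :: "'s set \<Rightarrow> ('s \<Rightarrow> 's \<Rightarrow> real) \<Rightarrow> ('s \<times> 's) set" where
  "edgs X P = {(x,y). x \<in> X \<and> y \<in> X \<and> x \<noteq> y \<and> P x y > 0}"

lemma elim_conn_aux:
  fixes P :: "'s \<Rightarrow> 's \<Rightarrow> real"
  assumes z: "z \<in> X" and Pzz: "P z z < 1"
    and nn: "\<forall>x\<in>X. \<forall>y\<in>X. 0 \<le> P x y"
    and P'def: "P' = (\<lambda>x y. P x y + P x z * P z y / (1 - P z z))"
    and uw: "(u,w) \<in> (edgs X P)\<^sup>*" and u: "u \<in> X - {z}"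
  shows "(w \<noteq> z \<longrightarrow> (u,w) \<in> (edgs (X-{z}) P')\<^sup>*) \<and>
         (w = z \<longrightarrow> (\<exists>v\<in>X-{z}. (u,v) \<in> (edgs (X-{z}) P')\<^sup>* \<and> P v z > 0))"
  using uw
proof (induction rule: rtrancl_induct)
  case base
  then show ?case using u by auto
next
  case (step w w')
  have ge: "P x y \<le> P' x y" if "x \<in> X" "y \<in> X" for x y
    using nn that z Pzz unfolding P'def by (auto intro!: divide_nonneg_pos mult_nonneg_nonneg)
  from step(2) have w: "w \<in> X" "w' \<in> X" "w \<noteq> w'" "P w w' > 0" by (auto simp: edgs_def)
  show ?case
  proof (cases "w = z")
    case False
    then have A: "(u,w) \<in> (edgs (X-{z}) P')\<^sup>*" using step.IH by auto
    show ?thesis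
    proof (cases "w' = z")
      case True
      then show ?thesis using A False w by auto
    next
      case False2: False
      have "(w,w') \<in> edgs (X-{z}) P'" using w False False2 ge[of w w'] by (auto simp: edgs_def)
      then show ?thesis using A False2 by auto
    qed
  next
    case True
    then obtain v where v: "v \<in> X - {z}" "(u,v) \<in> (edgs (X-{z}) P')\<^sup>*" "P v z > 0"
      using step.IH by auto
    have w'z: "w' \<noteq> z" using w True by auto
    show ?thesis
    proof (cases "v = w'")
      case True
      then show ?thesis using v w'z by auto
    next
      case False
      have "0 < P v z * P z w' / (1 - P z z)" using v w True Pzz by auto
      moreover have "0 \<le> P v w'" using nn v w by auto
      ultimately have "P' v w' > 0" unfolding P'def by linarith
      then have "(v,w') \<in> edgs (X-{z}) P'" using v w w'z False by (auto simp: edgs_def)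
      then show ?thesis using v w'z by (meson rtrancl.rtrancl_into_rtrancl)
    qed
  qed
qed

lemma elim_conn:
  fixes P :: "'s \<Rightarrow> 's \<Rightarrow> real"
  assumes z: "z \<in> X" and Pzz: "P z z < 1"
    and nn: "\<forall>x\<in>X. \<forall>y\<in>X. 0 \<le> P x y"
    and P'def: "P' = (\<lambda>x y. P x y + P x z * P z y / (1 - P z z))"
    and conn: "\<forall>x\<in>X. \<forall>y\<in>X. (x,y) \<in> (edgs X P)\<^sup>*"
  shows "\<forall>x\<in>X-{z}. \<forall>y\<in>X-{z}. (x,y) \<in> (edgs (X-{z}) P')\<^sup>*"
  using elim_conn_aux[OF z Pzz nn P'def] conn by blast

lemma tree_bound:
  fixes P :: "'s \<Rightarrow> 's \<Rightarrow> real"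
  shows "finite X \<Longrightarrow> card X = n \<Longrightarrow> (\<forall>x\<in>X. \<forall>y\<in>X. 0 \<le> P x y) \<Longrightarrow>
    (\<forall>x\<in>X. (\<Sum>y\<in>X. P x y) = 1) \<Longrightarrow> (\<forall>x\<in>X. 0 < \<pi> x) \<Longrightarrow> 1 \<le> K \<Longrightarrow>
    (\<forall>x\<in>X. \<forall>y\<in>X. x \<noteq> y \<longrightarrow> \<pi> x * P x y \<le> K * (\<pi> y * P y x)) \<Longrightarrow>
    (\<forall>x\<in>X. \<forall>y\<in>X. (x,y) \<in> (edgs X P)\<^sup>*) \<Longrightarrow> (\<forall>x\<in>X. 0 \<le> p x) \<Longrightarrow>
    (\<forall>y\<in>X. (\<Sum>x\<in>X. p x * P x y) = p y) \<Longrightarrow> x \<in> X \<Longrightarrow> y \<in> X \<Longrightarrow>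
    p x * \<pi> y \<le> K^(2^n) * (p y * \<pi> x)"
proof (induction n arbitrary: X P K x y rule: less_induct)
  case (less n X P K x y)
  note fin = less.prems(1) and cardX = less.prems(2) and nn = less.prems(3)
    and rows = less.prems(4) and pipos = less.prems(5) and K1 = less.prems(6)
    and bal = less.prems(7) and conn = less.prems(8) and pnn = less.prems(9)
    and stat = less.prems(10) and x = less.prems(11) and y = less.prems(12)
  have Kp: "1 \<le> K^(2^n)" using K1 by simp
  show ?case
  proof (cases "x = y")
    case True
    have "0 \<le> p x * \<pi> x" using pnn pipos x by (simp add: less_imp_le)
    then show ?thesis using True Kp by (simp add: mult_le_cancel_right1 mult_right_mono[of 1 "K^(2^n)"])
  next
    case xy: False
    have edge_out: "\<exists>w\<in>X. w \<noteq> u \<and> P u w > 0" if "u \<in> X" "v \<in> X" "u \<noteq> v" for u v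
    proof -
      have "(u,v) \<in> (edgs X P)\<^sup>*" using conn that by auto
      then show ?thesis
      proof (cases rule: converse_rtranclE)
        case base then show ?thesis using that by simp
      next
        case (step w) then show ?thesis by (auto simp: edgs_def)
      qed
    qed
    have c2: "2 \<le> card X"
    proof -
      have "{x,y} \<subseteq> X" using x y by auto
      then have "card {x,y} \<le> card X" using fin by (simp add: card_mono)
      then show ?thesis using xy by simp
    qed
    show ?thesis
    proof (cases "card X = 2")
      case True
      have X2: "X = {x,y}"
      proof -
        have "{x,y} \<subseteq> X" using x y by auto
        moreover have "card {x,y} = card X" using True xy by simp
        ultimately show ?thesis using fin card_subset_eq[of X "{x,y}"] by simp
      qed
      obtain w where w: "w \<in> X" "w \<noteq> x" "P x w > 0" using edge_out[OF x y xy] by auto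
      have wy: "w = y" using w X2 by auto
      have Pxy: "P x y > 0" using w wy by simp
      have "p x * P x y + p y * P y y = p y" using stat y X2 xy by simp
      moreover have "P y x + P y y = 1" using rows y X2 xy by simp
      ultimately have eq: "p x * P x y = p y * P y x"
        by (metis add.commute add_diff_cancel_left' mult.right_neutral right_diff_distrib')
      have b: "\<pi> y * P y x \<le> K * (\<pi> x * P x y)" using bal x y xy by auto
      have "p x * \<pi> y * P x y = \<pi> y * (p y * P y x)" using eq by (simp add: algebra_simps)
      also have "\<dots> = p y * (\<pi> y * P y x)" by simp
      also have "\<dots> \<le> p y * (K * (\<pi> x * P x y))" using b pnn y by (simp add: mult_left_mono)
      finally have "p x * \<pi> y * P x y \<le> (K * (p y * \<pi> x)) * P x y" by (simp add: algebra_simps)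
      then have 1: "p x * \<pi> y \<le> K * (p y * \<pi> x)" using Pxy by simp
      have "K \<le> K^(2^n)"
      proof -
        have "K^1 \<le> K^(2^n)" using K1 by (intro power_increasing) (use cardX True in auto)
        then show ?thesis by simp
      qed
      moreover have "0 \<le> p y * \<pi> x" using pnn pipos x y by (simp add: less_imp_le)
      ultimately show ?thesis using 1 by (meson mult_right_mono order_trans)
    next
      case False
      then have c3: "3 \<le> card X" using c2 by simp
      have "X - {x,y} \<noteq> {}"
      proof
        assume "X - {x,y} = {}"
        then have "X \<subseteq> {x,y}" by auto
        then have "card X \<le> card {x,y}" by (simp add: card_mono)
        also have "\<dots> \<le> 2" by (simp add: card_insert_le_m1)
        finally show False using c3 by simp
      qed
      then obtain z where z: "z \<in> X" "z \<noteq> x" "z \<noteq> y" by auto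
      obtain w where w: "w \<in> X" "w \<noteq> z" "P z w > 0" using edge_out[OF z(1) x] z by auto
      have "P z z + P z w = (\<Sum>u\<in>{z,w}. P z u)" using w by simp
      also have "\<dots> \<le> (\<Sum>u\<in>X. P z u)" using z w nn fin by (intro sum_mono2) auto
      finally have Pzz: "P z z < 1" using rows z w by simp
      define P' where "P' = (\<lambda>u v. P u v + P u z * P z v / (1 - P z z))"
      define X' where "X' = X - {z}"
      have finX': "finite X'" using fin by (simp add: X'_def)
      have cX': "card X' = n - 1" using cardX z fin by (simp add: X'_def)
      have nlt: "n - 1 < n" using cardX c3 by simp
      have nn': "\<forall>u\<in>X'. \<forall>v\<in>X'. 0 \<le> P' u v"
        using nn z Pzz by (auto simp: P'_def X'_def intro!: add_nonneg_nonneg divide_nonneg_pos)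
      have rows': "\<forall>u\<in>X'. (\<Sum>v\<in>X'. P' u v) = 1"
      proof
        fix u assume u: "u \<in> X'"
        have r1: "(\<Sum>v\<in>X'. P u v) = 1 - P u z"
          using rows u z fin by (simp add: X'_def sum_diff1)
        have r2: "(\<Sum>v\<in>X'. P z v) = 1 - P z z"
          using rows u z fin by (simp add: X'_def sum_diff1)
        have "(\<Sum>v\<in>X'. P' u v) = (\<Sum>v\<in>X'. P u v) + P u z / (1 - P z z) * (\<Sum>v\<in>X'. P z v)"
          by (simp add: P'_def sum.distrib sum_distrib_left)
        also have "\<dots> = 1" using r1 r2 Pzz by simp
        finally show "(\<Sum>v\<in>X'. P' u v) = 1" .
      qed
      have bal': "\<forall>u\<in>X'. \<forall>v\<in>X'. u \<noteq> v \<longrightarrow> \<pi> u * P' u v \<le> K\<^sup>2 * (\<pi> v * P' v u)"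
      proof (intro ballI impI)
        fix u v assume u: "u \<in> X'" and v: "v \<in> X'" and uv: "u \<noteq> v"
        have uX: "u \<in> X" "u \<noteq> z" and vX: "v \<in> X" "v \<noteq> z" using u v by (auto simp: X'_def)
        have b1: "\<pi> u * P u v \<le> K * (\<pi> v * P v u)" using bal uX vX uv by auto
        have b2: "\<pi> u * P u z \<le> K * (\<pi> z * P z u)" using bal uX z by auto
        have b3: "\<pi> z * P z v \<le> K * (\<pi> v * P v z)" using bal vX z by auto
        have d: "0 < 1 - P z z" using Pzz by simp
        have nnv: "0 \<le> P z v" "0 \<le> P z u" "0 \<le> P v z" "0 \<le> P v u" "0 \<le> \<pi> v"
          using nn uX vX z pipos by (auto simp: less_imp_le)
        have "\<pi> u * P u z * P z v \<le> K * (\<pi> z * P z u) * P z v"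
          using b2 nnv by (simp add: mult_right_mono)
        also have "\<dots> = K * P z u * (\<pi> z * P z v)" by (simp add: algebra_simps)
        also have "\<dots> \<le> K * P z u * (K * (\<pi> v * P v z))"
          using b3 K1 nnv by (intro mult_left_mono) auto
        finally have t2: "\<pi> u * P u z * P z v \<le> K\<^sup>2 * (\<pi> v * (P v z * P z u))"
          by (simp add: power2_eq_square algebra_simps)
        have t1: "\<pi> u * P u v \<le> K\<^sup>2 * (\<pi> v * P v u)"
        proof -
          have "K * (\<pi> v * P v u) \<le> K\<^sup>2 * (\<pi> v * P v u)"
            using K1 nnv by (intro mult_right_mono) (auto simp: power2_eq_square)
          then show ?thesis using b1 by linarith
        qed
        have "\<pi> u * P' u v = \<pi> u * P u v + (\<pi> u * P u z * P z v) / (1 - P z z)"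
          by (simp add: P'_def algebra_simps)
        also have "\<dots> \<le> K\<^sup>2 * (\<pi> v * P v u) + K\<^sup>2 * (\<pi> v * (P v z * P z u)) / (1 - P z z)"
          using t1 t2 d by (intro add_mono divide_right_mono) auto
        also have "\<dots> = K\<^sup>2 * (\<pi> v * P' v u)"
          by (simp add: P'_def algebra_simps add_divide_distrib)
        finally show "\<pi> u * P' u v \<le> K\<^sup>2 * (\<pi> v * P' v u)" .
      qed
      have conn': "\<forall>u\<in>X'. \<forall>v\<in>X'. (u,v) \<in> (edgs X' P')\<^sup>*"
        using elim_conn[OF z(1) Pzz nn P'_def conn] by (simp add: X'_def)
      have stat': "\<forall>v\<in>X'. (\<Sum>u\<in>X'. p u * P' u v) = p v"
      proof
        fix v assume v: "v \<in> X'"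
        have sz: "(\<Sum>u\<in>X'. p u * P u z) = p z * (1 - P z z)"
          using stat z fin by (simp add: X'_def sum_diff1 algebra_simps)
        have sv: "(\<Sum>u\<in>X'. p u * P u v) = p v - p z * P z v"
          using stat v z fin by (simp add: X'_def sum_diff1 algebra_simps)
        have "(\<Sum>u\<in>X'. p u * P' u v) = (\<Sum>u\<in>X'. p u * P u v) + (\<Sum>u\<in>X'. p u * P u z) * P z v / (1 - P z z)"
          by (simp add: P'_def algebra_simps sum.distrib sum_distrib_left sum_divide_distrib)
        also have "\<dots> = p v" using sz sv Pzz by simp
        finally show "(\<Sum>u\<in>X'. p u * P' u v) = p v" .
      qed
      have pnn': "\<forall>u\<in>X'. 0 \<le> p u" using pnn by (auto simp: X'_def)
      have pip': "\<forall>u\<in>X'. 0 < \<pi> u" using pipos by (auto simp: X'_def)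
      have K2: "1 \<le> K\<^sup>2" using K1 by (simp add: one_le_power)
      have x': "x \<in> X'" and y': "y \<in> X'" using x y z by (auto simp: X'_def)
      have "p x * \<pi> y \<le> (K\<^sup>2)^(2^(n-1)) * (p y * \<pi> x)"
        using less.IH[OF nlt finX' cX' nn' rows' pip' K2 bal' conn' pnn' stat' x' y'] .
      moreover have "(K\<^sup>2)^(2^(n-1)) = K^(2^n)"
      proof -
        have "(K\<^sup>2)^(2^(n-1)) = K^(2 * 2^(n-1))" by (simp add: power_mult)
        moreover have "2 * 2^(n-1) = (2::nat)^n" using nlt
          by (metis Suc_diff_1 gr_zeroI less_nat_zero_code power_Suc)
        ultimately show ?thesis by simp
      qed
      ultimately show ?thesis by simp
    qed
  qed
qed

lemma nn_int_PiM_exp: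
  fixes Sa :: "real measure"
  assumes Sa: "prob_space Sa" "sets Sa = sets borel"
  shows "(\<integral>\<^sup>+x. ennreal (\<Prod>k<N. exp (c * x k)) \<partial>PiM {..<N} (\<lambda>_. Sa))
         = (\<integral>\<^sup>+y. ennreal (exp (c * y)) \<partial>Sa) ^ N"
proof -
  interpret product_sigma_finite "\<lambda>_. Sa"
    unfolding product_sigma_finite_def using Sa prob_space_imp_sigma_finite by blast
  have m: "(\<lambda>y. ennreal (exp (c * y))) \<in> borel_measurable Sa"
    unfolding measurable_cong_sets[OF Sa(2) refl] by simp
  have "(\<integral>\<^sup>+x. ennreal (\<Prod>k<N. exp (c * x k)) \<partial>PiM {..<N} (\<lambda>_. Sa))
      = (\<integral>\<^sup>+x. (\<Prod>k\<in>{..<N}. (\<lambda>k y. ennreal (exp (c * y))) k (x k)) \<partial>PiM {..<N} (\<lambda>_. Sa))"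
    by (intro nn_integral_cong) (simp add: prod_ennreal[symmetric])
  also have "\<dots> = (\<Prod>k\<in>{..<N}. \<integral>\<^sup>+y. ennreal (exp (c * y)) \<partial>Sa)"
    by (rule product_nn_integral_prod) (simp_all add: m)
  finally show ?thesis by simp
qed

lemma prod_nn:
  assumes M2: "sigma_finite_measure M2"
    and f: "f \<in> borel_measurable M1" and g: "g \<in> borel_measurable M2"
    and fn: "\<And>x. 0 \<le> f x" and gn: "\<And>y. 0 \<le> g y"
  shows "(\<integral>\<^sup>+\<omega>. ennreal (f (fst \<omega>) * g (snd \<omega>)) \<partial>(M1 \<Otimes>\<^sub>M M2))
         = (\<integral>\<^sup>+x. ennreal (f x) \<partial>M1) * (\<integral>\<^sup>+y. ennreal (g y) \<partial>M2)"
proof -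
  have m: "(\<lambda>\<omega>. ennreal (f (fst \<omega>) * g (snd \<omega>))) \<in> borel_measurable (M1 \<Otimes>\<^sub>M M2)"
    using f g by measurable
  have "(\<integral>\<^sup>+\<omega>. ennreal (f (fst \<omega>) * g (snd \<omega>)) \<partial>(M1 \<Otimes>\<^sub>M M2))
      = (\<integral>\<^sup>+x. \<integral>\<^sup>+y. ennreal (f x) * ennreal (g y) \<partial>M2 \<partial>M1)"
    using sigma_finite_measure.nn_integral_fst[OF M2 m, symmetric] fn gn
    by (simp add: ennreal_mult)
  also have "\<dots> = (\<integral>\<^sup>+x. ennreal (f x) * (\<integral>\<^sup>+y. ennreal (g y) \<partial>M2) \<partial>M1)"
    using g by (simp add: nn_integral_cmult)
  also have "\<dots> = (\<integral>\<^sup>+x. ennreal (f x) \<partial>M1) * (\<integral>\<^sup>+y. ennreal (g y) \<partial>M2)"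
    using f by (simp add: nn_integral_multc)
  finally show ?thesis .
qed

lemma comp_meas:
  fixes Sa :: "real measure"
  assumes "sets Sa = sets borel" "k < N"
  shows "(\<lambda>x. x k) \<in> borel_measurable (PiM {..<N} (\<lambda>_. Sa))"
proof -
  have "(\<lambda>x. x k) \<in> measurable (PiM {..<N} (\<lambda>_. Sa)) Sa"
    using assms by (intro measurable_component_singleton) auto
  moreover have "measurable (PiM {..<N} (\<lambda>_. Sa)) Sa = measurable (PiM {..<N} (\<lambda>_. Sa)) borel"
    by (rule measurable_cong_sets) (auto simp: assms)
  ultimately show ?thesis by simp
qed

lemma sum_comp_meas:
  fixes Sa :: "real measure"
  assumes "sets Sa = sets borel"
  shows "(\<lambda>x. \<Sum>k<N. x k) \<in> borel_measurable (PiM {..<N} (\<lambda>_. Sa))"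
proof -
  have "(\<lambda>x. \<Sum>k\<in>{..<N}. (\<lambda>k x. x k) k x) \<in> borel_measurable (PiM {..<N} (\<lambda>_. Sa))"
    by (rule borel_measurable_sum) (use comp_meas[OF assms] in auto)
  then show ?thesis by simp
qed

lemma prod_exp_meas:
  fixes Sa :: "real measure" and c :: real and N :: nat
  assumes "sets Sa = sets borel"
  shows "(\<lambda>x. \<Prod>k<N. exp (c * x k)) \<in> borel_measurable (PiM {..<N} (\<lambda>_. Sa))"
proof -
  have "(\<lambda>x. \<Prod>k\<in>{..<N}. (\<lambda>k (x::nat\<Rightarrow>real). exp (c * x k)) k x) \<in> borel_measurable (PiM {..<N} (\<lambda>_. Sa))"
  proof (rule borel_measurable_prod)
    fix k assume "k \<in> {..<N}"
    then have [measurable]: "(\<lambda>x. x k) \<in> borel_measurable (PiM {..<N} (\<lambda>_. Sa))"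
      using comp_meas[OF assms] by auto
    show "(\<lambda>x. exp (c * x k)) \<in> borel_measurable (PiM {..<N} (\<lambda>_. Sa))" by measurable
  qed
  then show ?thesis by simp
qed

lemma mgf_prod:
  fixes Sa Sb :: "real measure"
  assumes Sa: "prob_space Sa" "sets Sa = sets borel"
    and Sb: "prob_space Sb" "sets Sb = sets borel"
  shows "(\<integral>\<^sup>+\<omega>. ennreal (exp (\<theta> * ((\<Sum>k<N. fst \<omega> k) - (\<Sum>k<N. snd \<omega> k) - real N * D)))
            \<partial>(PiM {..<N} (\<lambda>_. Sa) \<Otimes>\<^sub>M PiM {..<N} (\<lambda>_. Sb)))
       = (\<integral>\<^sup>+\<eta>. ennreal (exp (\<theta> * \<eta>)) \<partial>distr (Sa \<Otimes>\<^sub>M Sb) borel (\<lambda>(y, z). y - z - D)) ^ N"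
proof -
  define A where "A = (\<integral>\<^sup>+y. ennreal (exp (\<theta> * y)) \<partial>Sa)"
  define B where "B = (\<integral>\<^sup>+y. ennreal (exp ((-\<theta>) * y)) \<partial>Sb)"
  have sfb: "sigma_finite_measure (PiM {..<N} (\<lambda>_. Sb))"
    using Sb by (intro prob_space_imp_sigma_finite prob_space_PiM) auto
  have sfb1: "sigma_finite_measure Sb"
    using Sb by (intro prob_space_imp_sigma_finite) auto
  have mSa: "(\<lambda>y. exp (\<theta> * y) * exp (- \<theta> * D)) \<in> borel_measurable Sa"
    unfolding measurable_cong_sets[OF Sa(2) refl] by simp
  have mSb: "(\<lambda>y. exp (- \<theta> * y)) \<in> borel_measurable Sb"
    unfolding measurable_cong_sets[OF Sb(2) refl] by simp
  have e1: "exp (\<theta> * ((\<Sum>k<N. x k) - (\<Sum>k<N. y k) - real N * D))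
      = ((\<Prod>k<N. exp (\<theta> * x k)) * exp (- \<theta> * real N * D)) * (\<Prod>k<N. exp ((-\<theta>) * y k))"
    for x y :: "nat \<Rightarrow> real"
  proof -
    have eq: "\<theta> * ((\<Sum>k<N. x k) - (\<Sum>k<N. y k) - real N * D)
        = (\<Sum>k<N. \<theta> * x k) + (- \<theta> * real N * D) + (\<Sum>k<N. (-\<theta>) * y k)"
      by (simp add: sum_distrib_left algebra_simps sum_negf)
    show ?thesis by (simp only: eq exp_add exp_sum[OF finite_lessThan])
  qed
  have "(\<integral>\<^sup>+\<omega>. ennreal (exp (\<theta> * ((\<Sum>k<N. fst \<omega> k) - (\<Sum>k<N. snd \<omega> k) - real N * D)))
            \<partial>(PiM {..<N} (\<lambda>_. Sa) \<Otimes>\<^sub>M PiM {..<N} (\<lambda>_. Sb)))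
     = (\<integral>\<^sup>+\<omega>. ennreal ((\<lambda>x. (\<Prod>k<N. exp (\<theta> * x k)) * exp (- \<theta> * real N * D)) (fst \<omega>)
                 * (\<lambda>y. \<Prod>k<N. exp ((-\<theta>) * y k)) (snd \<omega>))
            \<partial>(PiM {..<N} (\<lambda>_. Sa) \<Otimes>\<^sub>M PiM {..<N} (\<lambda>_. Sb)))"
    by (simp only: e1)
  also have "\<dots> = (\<integral>\<^sup>+x. ennreal ((\<Prod>k<N. exp (\<theta> * x k)) * exp (- \<theta> * real N * D)) \<partial>PiM {..<N} (\<lambda>_. Sa))
       * (\<integral>\<^sup>+y. ennreal (\<Prod>k<N. exp ((-\<theta>) * y k)) \<partial>PiM {..<N} (\<lambda>_. Sb))"
    by (rule prod_nn[OF sfb]) (use prod_exp_meas[OF Sa(2), of \<theta> N] prod_exp_meas[OF Sb(2), of "-\<theta>" N] in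
        \<open>auto intro!: borel_measurable_times prod_nonneg mult_nonneg_nonneg\<close>)
  also have "\<dots> = A ^ N * ennreal (exp (- \<theta> * real N * D)) * B ^ N"
    using nn_int_PiM_exp[OF Sa, of N \<theta>] nn_int_PiM_exp[OF Sb, of N "-\<theta>"] prod_exp_meas[OF Sa(2), of \<theta> N]
    by (simp add: A_def B_def ennreal_mult' nn_integral_multc prod_nonneg)
  finally have L: "(\<integral>\<^sup>+\<omega>. ennreal (exp (\<theta> * ((\<Sum>k<N. fst \<omega> k) - (\<Sum>k<N. snd \<omega> k) - real N * D)))
            \<partial>(PiM {..<N} (\<lambda>_. Sa) \<Otimes>\<^sub>M PiM {..<N} (\<lambda>_. Sb))) = A ^ N * ennreal (exp (- \<theta> * real N * D)) * B ^ N" .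
  have "(\<integral>\<^sup>+\<eta>. ennreal (exp (\<theta> * \<eta>)) \<partial>distr (Sa \<Otimes>\<^sub>M Sb) borel (\<lambda>(y, z). y - z - D))
      = (\<integral>\<^sup>+\<omega>. ennreal (exp (\<theta> * (fst \<omega> - snd \<omega> - D))) \<partial>(Sa \<Otimes>\<^sub>M Sb))"
  proof -
    have mm: "(\<lambda>(y, z). y - z - D) \<in> measurable (Sa \<Otimes>\<^sub>M Sb) borel"
      unfolding measurable_cong_sets[OF sets_pair_measure_cong[OF Sa(2) Sb(2)] refl] by measurable
    show ?thesis by (subst nn_integral_distr[OF mm]) (auto simp: case_prod_beta)
  qed
  also have "\<dots> = (\<integral>\<^sup>+\<omega>. ennreal ((\<lambda>y. exp (\<theta> * y) * exp (- \<theta> * D)) (fst \<omega>) * (\<lambda>z. exp (- \<theta> * z)) (snd \<omega>)) \<partial>(Sa \<Otimes>\<^sub>M Sb))"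
    by (intro nn_integral_cong) (simp add: exp_add[symmetric] algebra_simps)
  also have "\<dots> = (\<integral>\<^sup>+y. ennreal (exp (\<theta> * y) * exp (- \<theta> * D)) \<partial>Sa) * B"
    unfolding B_def by (rule prod_nn[OF sfb1 mSa mSb]) auto
  also have "\<dots> = A * ennreal (exp (- \<theta> * D)) * B"
  proof -
    have mSa': "(\<lambda>y. ennreal (exp (\<theta> * y))) \<in> borel_measurable Sa"
      unfolding measurable_cong_sets[OF Sa(2) refl] by simp
    show ?thesis unfolding A_def by (simp add: ennreal_mult' nn_integral_multc[OF mSa'])
  qed
  finally have R: "(\<integral>\<^sup>+\<eta>. ennreal (exp (\<theta> * \<eta>)) \<partial>distr (Sa \<Otimes>\<^sub>M Sb) borel (\<lambda>(y, z). y - z - D))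
     = A * ennreal (exp (- \<theta> * D)) * B" .
  have "ennreal (exp (- \<theta> * real N * D)) = ennreal (exp (- \<theta> * D)) ^ N"
  proof -
    have "exp (- \<theta> * real N * D) = exp (- \<theta> * D) ^ N"
      by (simp add: exp_of_nat_mult[symmetric] algebra_simps)
    then show ?thesis by (simp add: ennreal_power)
  qed
  then show ?thesis using L R by (simp add: power_mult_distrib)
qed

lemma int_pos_prob:
  fixes F :: "'a \<Rightarrow> real"
  assumes "prob_space Q" "integrable Q F" "\<And>x. 0 < F x"
  shows "0 < integral\<^sup>L Q F"
proof -
  have ge: "0 \<le> integral\<^sup>L Q F" using assms by (simp add: integral_nonneg less_imp_le)
  have "integral\<^sup>L Q F \<noteq> 0"
  proof
    assume "integral\<^sup>L Q F = 0"
    then have "AE x in Q. F x = 0"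
      using integral_nonneg_eq_0_iff_AE[of Q F] assms by (simp add: less_imp_le)
    then have "AE x in Q. False" using assms(3) by (auto elim: AE_mp simp: less_le)
    then show False using prob_space.AE_False[OF assms(1)] by simp
  qed
  then show ?thesis using ge by simp
qed

lemma assoc_ineq:
  fixes Q :: "'a measure" and \<Delta> :: "'a \<Rightarrow> real"
  assumes Q: "prob_space Q" and mD: "\<Delta> \<in> borel_measurable Q" and tau: "0 < \<tau>"
    and intF: "integrable Q (\<lambda>\<omega>. exp (- (\<Delta> \<omega> - D) / \<tau>))"
  shows "(\<integral>\<omega>. exp (- (\<Delta> \<omega> - D) / \<tau>) * (1 / (1 + exp (- \<Delta> \<omega> / \<tau>))) \<partial>Q)
         \<le> (\<integral>\<omega>. exp (- (\<Delta> \<omega> - D) / \<tau>) \<partial>Q) * (\<integral>\<omega>. 1 / (1 + exp (- \<Delta> \<omega> / \<tau>)) \<partial>Q)"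
proof -
  interpret prob_space Q by fact
  define F where "F = (\<lambda>\<omega>. exp (- (\<Delta> \<omega> - D) / \<tau>))"
  define h where "h = (\<lambda>\<omega>. 1 / (1 + exp (- \<Delta> \<omega> / \<tau>)))"
  define m where "m = integral\<^sup>L Q F"
  have mpos: "0 < m" unfolding m_def F_def by (rule int_pos_prob[OF Q intF]) simp
  define c where "c = D - \<tau> * ln m"
  define hs where "hs = 1 / (1 + exp (- c / \<tau>))"
  have mh[measurable]: "h \<in> borel_measurable Q" unfolding h_def using mD by measurable
  have mF[measurable]: "F \<in> borel_measurable Q" unfolding F_def using mD by measurable
  have hb: "0 \<le> h \<omega> \<and> h \<omega> \<le> 1" for \<omega>
    unfolding h_def by (simp add: add_pos_nonneg)
  have inth: "integrable Q h"
    by (rule integrable_const_bound[where B=1]) (use hb in auto)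
  have intF': "integrable Q F" using intF by (simp add: F_def)
  have intFh: "integrable Q (\<lambda>\<omega>. F \<omega> * h \<omega>)"
  proof (rule Bochner_Integration.integrable_bound[OF intF'])
    show "(\<lambda>\<omega>. F \<omega> * h \<omega>) \<in> borel_measurable Q" by measurable
    show "AE \<omega> in Q. norm (F \<omega> * h \<omega>) \<le> norm (F \<omega>)"
      using hb by (auto simp: F_def abs_mult intro!: mult_left_le)
  qed
  have pw: "(F \<omega> - m) * (h \<omega> - hs) \<le> 0" for \<omega>
  proof (cases "\<Delta> \<omega> \<le> c")
    case True
    have "m = exp (- (c - D) / \<tau>)" using mpos tau by (simp add: c_def)
    also have "\<dots> \<le> F \<omega>" unfolding F_def using True tau by (simp add: divide_right_mono)
    finally have 1: "0 \<le> F \<omega> - m" by simp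
    have "exp (- c / \<tau>) \<le> exp (- \<Delta> \<omega> / \<tau>)" using True tau by (simp add: divide_right_mono)
    then have "h \<omega> \<le> hs" unfolding h_def hs_def by (intro divide_left_mono) (auto simp: add_pos_nonneg)
    then show ?thesis using 1 by (simp add: mult_nonneg_nonpos)
  next
    case False
    have "F \<omega> \<le> exp (- (c - D) / \<tau>)" unfolding F_def using False tau by (simp add: divide_right_mono)
    also have "\<dots> = m" using mpos tau by (simp add: c_def)
    finally have 1: "F \<omega> - m \<le> 0" by simp
    have "exp (- \<Delta> \<omega> / \<tau>) \<le> exp (- c / \<tau>)" using False tau by (simp add: divide_right_mono)
    then have "hs \<le> h \<omega>" unfolding h_def hs_def by (intro divide_left_mono) (auto simp: add_pos_nonneg)
    then show ?thesis using 1 by (simp add: mult_nonpos_nonneg)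
  qed
  have "(\<integral>\<omega>. (F \<omega> - m) * (h \<omega> - hs) \<partial>Q) \<le> (\<integral>\<omega>. 0 \<partial>Q)"
    by (rule integral_mono) (use pw intFh inth intF' in \<open>auto simp: algebra_simps\<close>)
  moreover have "(\<integral>\<omega>. (F \<omega> - m) * (h \<omega> - hs) \<partial>Q)
      = (\<integral>\<omega>. F \<omega> * h \<omega> \<partial>Q) - m * (\<integral>\<omega>. h \<omega> \<partial>Q) - hs * m + m * hs"
  proof -
    have "(\<lambda>\<omega>. (F \<omega> - m) * (h \<omega> - hs)) = (\<lambda>\<omega>. (F \<omega> * h \<omega> - m * h \<omega>) - (hs * F \<omega> - m * hs))"
      by (auto simp: algebra_simps)
    then show ?thesis using intFh inth intF' by (simp add: m_def prob_space)
  qed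
  ultimately have "(\<integral>\<omega>. F \<omega> * h \<omega> \<partial>Q) \<le> m * (\<integral>\<omega>. h \<omega> \<partial>Q)" by simp
  then show ?thesis by (simp add: F_def h_def m_def)
qed

definition sw :: "real measure \<Rightarrow> real measure \<Rightarrow> real \<Rightarrow> nat \<Rightarrow> real" where
  "sw Sa Sb tau N = (\<integral>\<omega>. 1 / (1 + exp (((\<Sum>k<N. fst \<omega> k) / real N - (\<Sum>k<N. snd \<omega> k) / real N) / tau))
        \<partial>(PiM {..<N} (\<lambda>_. Sa) \<Otimes>\<^sub>M PiM {..<N} (\<lambda>_. Sb)))"

lemma exp_identity:
  fixes d D \<tau> :: real
  shows "exp (D / \<tau>) * (1 / (1 + exp (d / \<tau>))) = exp (- (d - D) / \<tau>) * (1 / (1 + exp (- d / \<tau>)))"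
proof -
  define u where "u = exp (d / \<tau>)"
  have u: "0 < u" by (simp add: u_def)
  have e1: "exp (- d / \<tau>) = 1 / u" by (simp add: u_def exp_minus divide_inverse)
  have e2: "exp (- (d - D) / \<tau>) = exp (D / \<tau>) / u"
    by (simp add: u_def exp_diff[symmetric] diff_divide_distrib)
  have e3: "1 + 1 / u = (u + 1) / u" using u by (simp add: field_simps)
  have "exp (D / \<tau>) / u * (1 / (1 + 1 / u)) = exp (D / \<tau>) / u * (u / (u + 1))"
    unfolding e3 by simp
  also have "\<dots> = exp (D / \<tau>) * (1 / (1 + u))" using u by (simp add: add.commute)
  finally show ?thesis unfolding e1 e2 u_def[symmetric] by simp
qed

lemma switch_ineq:
  fixes Sa Sb :: "real measure"
  assumes Sa: "prob_space Sa" "sets Sa = sets borel"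
    and Sb: "prob_space Sb" "sets Sb = sets borel"
    and tau: "0 < tau" and N: "1 \<le> N" and m: "0 \<le> m"
    and fin: "(\<integral>\<^sup>+\<eta>. ennreal (exp ((- 1 / (real N * tau)) * \<eta>)) \<partial>distr (Sa \<Otimes>\<^sub>M Sb) borel (\<lambda>(y, z). y - z - D)) = ennreal m"
  shows "exp (D / tau) * sw Sa Sb tau N \<le> m ^ N * sw Sb Sa tau N"
proof -
  define Q where "Q = PiM {..<N} (\<lambda>_. Sa) \<Otimes>\<^sub>M PiM {..<N} (\<lambda>_. Sb)"
  define \<Delta> where "\<Delta> = (\<lambda>\<omega>::(nat\<Rightarrow>real)\<times>(nat\<Rightarrow>real). (\<Sum>k<N. fst \<omega> k) / real N - (\<Sum>k<N. snd \<omega> k) / real N)"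
  have pa: "prob_space (PiM {..<N} (\<lambda>_. Sa))" using Sa by (intro prob_space_PiM) auto
  have pb: "prob_space (PiM {..<N} (\<lambda>_. Sb))" using Sb by (intro prob_space_PiM) auto
  have Q: "prob_space Q" unfolding Q_def by (rule prob_space_pair[OF pa pb])
  have ma[measurable]: "(\<lambda>x. \<Sum>k<N. x k) \<in> borel_measurable (PiM {..<N} (\<lambda>_. Sa))"
    by (rule sum_comp_meas[OF Sa(2)])
  have mb[measurable]: "(\<lambda>x. \<Sum>k<N. x k) \<in> borel_measurable (PiM {..<N} (\<lambda>_. Sb))"
    by (rule sum_comp_meas[OF Sb(2)])
  have mD[measurable]: "\<Delta> \<in> borel_measurable Q" unfolding \<Delta>_def Q_def by measurable
  have Npos: "0 < real N" using N by simp
  have Feq: "exp (- (\<Delta> \<omega> - D) / tau) = exp ((- 1 / (real N * tau)) * ((\<Sum>k<N. fst \<omega> k) - (\<Sum>k<N. snd \<omega> k) - real N * D))" for \<omega>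
  proof -
    have "- (\<Delta> \<omega> - D) / tau = (- 1 / (real N * tau)) * ((\<Sum>k<N. fst \<omega> k) - (\<Sum>k<N. snd \<omega> k) - real N * D)"
      unfolding \<Delta>_def using Npos tau by (simp add: field_simps)
    then show ?thesis by simp
  qed
  have nnF: "(\<integral>\<^sup>+\<omega>. ennreal (exp (- (\<Delta> \<omega> - D) / tau)) \<partial>Q) = ennreal (m ^ N)"
    unfolding Feq Q_def mgf_prod[OF Sa Sb] fin using m by (simp add: ennreal_power)
  have mF[measurable]: "(\<lambda>\<omega>. exp (- (\<Delta> \<omega> - D) / tau)) \<in> borel_measurable Q" by measurable
  have intF: "integrable Q (\<lambda>\<omega>. exp (- (\<Delta> \<omega> - D) / tau))"
    by (rule integrableI_nn_integral_finite[OF mF _ nnF]) simp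
  have valF: "(\<integral>\<omega>. exp (- (\<Delta> \<omega> - D) / tau) \<partial>Q) = m ^ N"
    using integral_eq_nn_integral[OF mF] nnF m by simp
  have "exp (D / tau) * sw Sa Sb tau N = (\<integral>\<omega>. exp (D / tau) * (1 / (1 + exp (\<Delta> \<omega> / tau))) \<partial>Q)"
    unfolding sw_def Q_def \<Delta>_def by (rule integral_mult_right_zero[symmetric])
  also have "\<dots> = (\<integral>\<omega>. exp (- (\<Delta> \<omega> - D) / tau) * (1 / (1 + exp (- \<Delta> \<omega> / tau))) \<partial>Q)"
    by (rule Bochner_Integration.integral_cong[OF refl exp_identity])
  also have "\<dots> \<le> (\<integral>\<omega>. exp (- (\<Delta> \<omega> - D) / tau) \<partial>Q) * (\<integral>\<omega>. 1 / (1 + exp (- \<Delta> \<omega> / tau)) \<partial>Q)"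
    by (rule assoc_ineq[OF Q mD tau intF])
  also have "(\<integral>\<omega>. 1 / (1 + exp (- \<Delta> \<omega> / tau)) \<partial>Q) = sw Sb Sa tau N"
  proof -
    interpret pair_sigma_finite "PiM {..<N} (\<lambda>_. Sa)" "PiM {..<N} (\<lambda>_. Sb)"
      using pa pb by (simp add: pair_sigma_finite_def prob_space_imp_sigma_finite)
    have mh: "(\<lambda>\<omega>. 1 / (1 + exp (- \<Delta> \<omega> / tau))) \<in> borel_measurable (PiM {..<N} (\<lambda>_. Sa) \<Otimes>\<^sub>M PiM {..<N} (\<lambda>_. Sb))"
      using mD unfolding Q_def by measurable
    have "(\<integral>\<omega>. 1 / (1 + exp (- \<Delta> \<omega> / tau)) \<partial>Q)
        = (\<integral>(x,y). (\<lambda>\<omega>. 1 / (1 + exp (- \<Delta> \<omega> / tau))) (y,x) \<partial>(PiM {..<N} (\<lambda>_. Sb) \<Otimes>\<^sub>M PiM {..<N} (\<lambda>_. Sa)))"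
      unfolding Q_def by (rule integral_product_swap[OF mh, symmetric])
    also have "\<dots> = sw Sb Sa tau N"
      unfolding sw_def \<Delta>_def
      by (rule Bochner_Integration.integral_cong[OF refl]) (auto simp: case_prod_beta minus_diff_eq)
    finally show ?thesis .
  qed
  finally show ?thesis unfolding valF .
qed

lemma exp_taylor2: "exp (x::real) \<le> 1 + x + x\<^sup>2 * exp \<bar>x\<bar>"
proof -
  obtain t where t: "\<bar>t\<bar> \<le> \<bar>x\<bar>" "exp x = (\<Sum>m<2. x ^ m / fact m) + exp t / fact 2 * x ^ 2"
    using Maclaurin_exp_le[of x 2] by blast
  have e: "exp t \<le> exp \<bar>x\<bar>" using t(1) by simp
  have "exp x = 1 + x + exp t / 2 * x\<^sup>2" using t(2) by (simp add: numeral_2_eq_2)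
  also have "\<dots> \<le> 1 + x + exp \<bar>x\<bar> * x\<^sup>2"
  proof -
    have "exp t / 2 \<le> exp \<bar>x\<bar>" using e exp_gt_zero[of t] by linarith
    then show ?thesis by (intro add_left_mono mult_right_mono) auto
  qed
  finally show ?thesis by (simp add: algebra_simps)
qed

lemma sq_le_exp: "(y::real)\<^sup>2 \<le> 4 * exp \<bar>y\<bar>"
proof -
  have "\<bar>y\<bar> / 2 \<le> exp (\<bar>y\<bar> / 2)" using exp_ge_add_one_self[of "\<bar>y\<bar>/2"] by linarith
  then have "(\<bar>y\<bar> / 2)\<^sup>2 \<le> (exp (\<bar>y\<bar> / 2))\<^sup>2" by (intro power_mono) auto
  also have "\<dots> = exp \<bar>y\<bar>" by (simp add: power2_eq_square exp_add[symmetric])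
  finally show ?thesis by (simp add: power_divide)
qed

locale noise =
  fixes \<nu> :: "real measure"
  assumes nu: "prob_space \<nu>" and nu_sets: "sets \<nu> = sets borel"
    and int1: "integrable \<nu> (\<lambda>\<eta>. \<eta>)" and mean0: "(\<integral>\<eta>. \<eta> \<partial>\<nu>) = 0"
    and intexp: "\<And>\<theta>. integrable \<nu> (\<lambda>\<eta>. exp (\<theta> * \<eta>))"
begin

definition Mg where "Mg \<theta> = (\<integral>\<eta>. exp (\<theta> * \<eta>) \<partial>\<nu>)"

lemma meas[measurable]: "f \<in> borel_measurable borel \<Longrightarrow> f \<in> borel_measurable \<nu>"
  unfolding measurable_cong_sets[OF nu_sets refl] by simp

lemma int_const: "integrable \<nu> (\<lambda>_. c::real)"
  using nu by (simp add: prob_space.finite_measure finite_measure.integrable_const)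

lemma Mg_pos: "0 < Mg \<theta>"
  unfolding Mg_def by (rule int_pos_prob[OF nu intexp]) simp

lemma Mg_ge1: "1 \<le> Mg \<theta>"
proof -
  have "(\<integral>\<eta>. 1 + \<theta> * \<eta> \<partial>\<nu>) \<le> Mg \<theta>"
    unfolding Mg_def by (rule integral_mono) (use int_const int1 intexp in auto)
  moreover have "(\<integral>\<eta>. 1 + \<theta> * \<eta> \<partial>\<nu>) = 1"
    using int_const int1 mean0 nu by (simp add: prob_space.prob_space)
  ultimately show ?thesis by simp
qed

lemma Mg_nn: "(\<integral>\<^sup>+\<eta>. ennreal (exp (\<theta> * \<eta>)) \<partial>\<nu>) = ennreal (Mg \<theta>)"
  unfolding Mg_def by (rule nn_integral_eq_integral[OF intexp]) auto

definition Cq where "Cq = (\<integral>\<eta>. \<eta>\<^sup>2 * exp \<bar>\<eta>\<bar> \<partial>\<nu>)"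

lemma int_sq: "integrable \<nu> (\<lambda>\<eta>. \<eta>\<^sup>2 * exp \<bar>\<eta>\<bar>)"
proof (rule Bochner_Integration.integrable_bound)
  show "integrable \<nu> (\<lambda>\<eta>. 4 * (exp (2 * \<eta>) + exp ((-2) * \<eta>)))"
    by (intro integrable_mult_right Bochner_Integration.integrable_add intexp)
  show "(\<lambda>\<eta>. \<eta>\<^sup>2 * exp \<bar>\<eta>\<bar>) \<in> borel_measurable \<nu>" by measurable
  show "AE \<eta> in \<nu>. norm (\<eta>\<^sup>2 * exp \<bar>\<eta>\<bar>) \<le> norm (4 * (exp (2 * \<eta>) + exp ((-2) * \<eta>)))"
  proof (intro AE_I2)
    fix \<eta> :: real
    have "\<eta>\<^sup>2 * exp \<bar>\<eta>\<bar> \<le> 4 * exp \<bar>\<eta>\<bar> * exp \<bar>\<eta>\<bar>"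
      using sq_le_exp[of \<eta>] by (intro mult_right_mono) auto
    also have "\<dots> = 4 * exp (2 * \<bar>\<eta>\<bar>)" by (simp add: exp_add[symmetric])
    also have "\<dots> \<le> 4 * (exp (2 * \<eta>) + exp ((-2) * \<eta>))"
      by (cases "0 \<le> \<eta>") auto
    finally show "norm (\<eta>\<^sup>2 * exp \<bar>\<eta>\<bar>) \<le> norm (4 * (exp (2 * \<eta>) + exp ((-2) * \<eta>)))"
      by (simp add: add_pos_pos)
  qed
qed

lemma Cq_nn: "0 \<le> Cq"
  unfolding Cq_def by (rule Bochner_Integration.integral_nonneg) auto

lemma Mg_upper: assumes "\<bar>\<theta>\<bar> \<le> 1" shows "Mg \<theta> \<le> 1 + Cq * \<theta>\<^sup>2"
proof -
  have pw: "exp (\<theta> * \<eta>) \<le> 1 + \<theta> * \<eta> + \<theta>\<^sup>2 * (\<eta>\<^sup>2 * exp \<bar>\<eta>\<bar>)" for \<eta>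
  proof -
    have "exp (\<theta> * \<eta>) \<le> 1 + \<theta> * \<eta> + (\<theta> * \<eta>)\<^sup>2 * exp \<bar>\<theta> * \<eta>\<bar>" by (rule exp_taylor2)
    also have "(\<theta> * \<eta>)\<^sup>2 * exp \<bar>\<theta> * \<eta>\<bar> \<le> \<theta>\<^sup>2 * (\<eta>\<^sup>2 * exp \<bar>\<eta>\<bar>)"
    proof -
      have "\<bar>\<theta> * \<eta>\<bar> \<le> \<bar>\<eta>\<bar>" using assms by (simp add: abs_mult mult_left_le_one_le)
      then have "exp \<bar>\<theta> * \<eta>\<bar> \<le> exp \<bar>\<eta>\<bar>" by simp
      then have "\<eta>\<^sup>2 * exp \<bar>\<theta> * \<eta>\<bar> \<le> \<eta>\<^sup>2 * exp \<bar>\<eta>\<bar>" by (rule mult_left_mono) simp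
      then have "\<theta>\<^sup>2 * (\<eta>\<^sup>2 * exp \<bar>\<theta> * \<eta>\<bar>) \<le> \<theta>\<^sup>2 * (\<eta>\<^sup>2 * exp \<bar>\<eta>\<bar>)" by (rule mult_left_mono) simp
      then show ?thesis by (simp add: power_mult_distrib mult.assoc)
    qed
    finally show ?thesis by simp
  qed
  have "Mg \<theta> \<le> (\<integral>\<eta>. 1 + \<theta> * \<eta> + \<theta>\<^sup>2 * (\<eta>\<^sup>2 * exp \<bar>\<eta>\<bar>) \<partial>\<nu>)"
    unfolding Mg_def by (rule integral_mono) (use intexp int_const int1 int_sq pw in auto)
  also have "\<dots> = 1 + Cq * \<theta>\<^sup>2"
    using int_const int1 int_sq mean0 nu by (simp add: Cq_def prob_space.prob_space)
  finally show ?thesis .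
qed

lemma Mg_pow_bound:
  assumes N: "1 \<le> N" and tau: "0 < \<tau>" and big: "1 \<le> real N * \<tau>"
  shows "Mg (- 1 / (real N * \<tau>)) ^ N \<le> exp (Cq / (real N * \<tau>\<^sup>2))"
proof -
  define \<theta> where "\<theta> = - 1 / (real N * \<tau>)"
  have Npos: "0 < real N" using N by simp
  have th: "\<bar>\<theta>\<bar> \<le> 1" unfolding \<theta>_def using big Npos tau by (simp add: abs_div)
  have "Mg \<theta> \<le> exp (Cq * \<theta>\<^sup>2)"
    using Mg_upper[OF th] exp_ge_add_one_self[of "Cq * \<theta>\<^sup>2"] by linarith
  then have "Mg \<theta> ^ N \<le> exp (Cq * \<theta>\<^sup>2) ^ N"
    using Mg_pos by (intro power_mono) (auto simp: less_imp_le)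
  also have "\<dots> = exp (real N * (Cq * \<theta>\<^sup>2))" by (simp add: exp_of_nat_mult)
  also have "real N * (Cq * \<theta>\<^sup>2) = Cq / (real N * \<tau>\<^sup>2)"
    unfolding \<theta>_def using Npos tau by (simp add: field_simps power2_eq_square)
  finally show ?thesis by (simp add: \<theta>_def)
qed

end

lemma exp_strict: assumes "x \<noteq> 0" shows "1 + x < exp (x::real)"
proof (cases "x \<le> -1")
  case True
  then show ?thesis using exp_gt_zero[of x] by linarith
next
  case False
  then have h: "0 \<le> 1 + x / 2" by simp
  have "1 + x / 2 \<le> exp (x / 2)" using exp_ge_add_one_self[of "x/2"] by simp
  then have "(1 + x / 2)\<^sup>2 \<le> (exp (x / 2))\<^sup>2" using h by (intro power_mono) auto
  also have "\<dots> = exp x" by (simp add: power2_eq_square exp_add[symmetric])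
  finally have "1 + x + x\<^sup>2 / 4 \<le> exp x" by (simp add: power2_eq_square algebra_simps)
  moreover have "0 < x\<^sup>2" using assms by simp
  ultimately show ?thesis by linarith
qed

context noise
begin

lemma space_nu: "space \<nu> = UNIV"
  using sets_eq_imp_space_eq[OF nu_sets] by simp

lemma Mg_degen: assumes "AE \<eta> in \<nu>. \<eta> = 0" shows "Mg \<theta> = 1"
proof -
  have "Mg \<theta> = (\<integral>\<eta>. 1 \<partial>\<nu>)"
    unfolding Mg_def by (rule integral_cong_AE) (use assms in auto)
  then show ?thesis using nu by (simp add: prob_space.prob_space)
qed

lemma Mg_mono: assumes "0 \<le> \<delta>" "\<delta> \<le> \<theta>" shows "Mg \<delta> \<le> Mg \<theta>"
proof -
  have pw: "exp (\<delta> * \<eta>) + (\<theta> - \<delta>) * \<eta> \<le> exp (\<theta> * \<eta>)" for \<eta>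
  proof -
    have "exp (\<delta> * \<eta>) * (1 + (\<theta> - \<delta>) * \<eta>) \<le> exp (\<delta> * \<eta>) * exp ((\<theta> - \<delta>) * \<eta>)"
      by (intro mult_left_mono) auto
    also have "\<dots> = exp (\<theta> * \<eta>)" by (simp add: exp_add[symmetric] algebra_simps)
    finally have 1: "exp (\<delta> * \<eta>) + (\<theta> - \<delta>) * \<eta> * exp (\<delta> * \<eta>) \<le> exp (\<theta> * \<eta>)"
      by (simp add: algebra_simps)
    have "(\<theta> - \<delta>) * \<eta> \<le> (\<theta> - \<delta>) * \<eta> * exp (\<delta> * \<eta>)"
    proof (cases "0 \<le> \<eta>")
      case True
      then have "1 \<le> exp (\<delta> * \<eta>)" using assms by simp
      moreover have "0 \<le> (\<theta> - \<delta>) * \<eta>" using True assms by simp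
      ultimately show ?thesis by (simp add: mult_le_cancel_left1)
    next
      case False
      then have "exp (\<delta> * \<eta>) \<le> 1" using assms by (simp add: mult_nonneg_nonpos)
      moreover have "(\<theta> - \<delta>) * \<eta> \<le> 0" using False assms by (simp add: mult_nonneg_nonpos)
      ultimately have "0 \<le> ((\<theta> - \<delta>) * \<eta>) * (exp (\<delta> * \<eta>) - 1)"
        by (intro mult_nonpos_nonpos) auto
      then show ?thesis by (simp add: algebra_simps)
    qed
    then show ?thesis using 1 by linarith
  qed
  have "(\<integral>\<eta>. exp (\<delta> * \<eta>) + (\<theta> - \<delta>) * \<eta> \<partial>\<nu>) \<le> Mg \<theta>"
    unfolding Mg_def by (rule integral_mono) (use intexp int1 pw in auto)
  moreover have "(\<integral>\<eta>. exp (\<delta> * \<eta>) + (\<theta> - \<delta>) * \<eta> \<partial>\<nu>) = Mg \<delta>"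
    using intexp int1 mean0 by (simp add: Mg_def)
  ultimately show ?thesis by linarith
qed

lemma Mg_gt1: assumes nd: "\<not> (AE \<eta> in \<nu>. \<eta> = 0)" and d: "0 < \<delta>" shows "1 < Mg \<delta>"
proof -
  have int: "integrable \<nu> (\<lambda>\<eta>. exp (\<delta> * \<eta>) - 1 - \<delta> * \<eta>)"
    using intexp int1 int_const by auto
  have nn: "AE \<eta> in \<nu>. 0 \<le> exp (\<delta> * \<eta>) - 1 - \<delta> * \<eta>"
    using exp_ge_add_one_self by (intro AE_I2) (simp add: algebra_simps)
  have val: "(\<integral>\<eta>. exp (\<delta> * \<eta>) - 1 - \<delta> * \<eta> \<partial>\<nu>) = Mg \<delta> - 1"
    using intexp int1 int_const mean0 nu by (simp add: Mg_def prob_space.prob_space)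
  have "Mg \<delta> - 1 \<noteq> 0"
  proof
    assume "Mg \<delta> - 1 = 0"
    then have "AE \<eta> in \<nu>. exp (\<delta> * \<eta>) - 1 - \<delta> * \<eta> = 0"
      using integral_nonneg_eq_0_iff_AE[OF int nn] val by simp
    then have "AE \<eta> in \<nu>. \<eta> = 0"
    proof (rule AE_mp, intro AE_I2 impI)
      fix \<eta> assume "exp (\<delta> * \<eta>) - 1 - \<delta> * \<eta> = 0"
      then have "\<not> 1 + \<delta> * \<eta> < exp (\<delta> * \<eta>)" by simp
      then have "\<delta> * \<eta> = 0" using exp_strict by blast
      then show "\<eta> = 0" using d by simp
    qed
    then show False using nd by simp
  qed
  moreover have "1 \<le> Mg \<delta>" by (rule Mg_ge1)
  ultimately show ?thesis by linarith
qed

lemma exists_tp: assumes nd: "\<not> (AE \<eta> in \<nu>. \<eta> = 0)"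
  shows "\<exists>t>0. 0 < measure \<nu> {\<eta>. t \<le> \<eta>}"
proof (rule ccontr)
  assume "\<not> (\<exists>t>0. 0 < measure \<nu> {\<eta>. t \<le> \<eta>})"
  then have z: "\<And>t. 0 < t \<Longrightarrow> measure \<nu> {\<eta>. t \<le> \<eta>} = 0"
    by (metis measure_nonneg order_less_le)
  have sets: "{\<eta>. t \<le> \<eta>} \<in> sets \<nu>" for t :: real
    using nu_sets by simp
  have "\<And>n::nat. AE \<eta> in \<nu>. \<eta> \<notin> {\<eta>. 1 / Suc n \<le> \<eta>}"
    using z prob_space.prob_eq_0[OF nu sets] by simp
  then have "AE \<eta> in \<nu>. \<forall>n::nat. \<eta> \<notin> {\<eta>. 1 / Suc n \<le> \<eta>}"
    by (simp add: AE_all_countable)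
  then have le0: "AE \<eta> in \<nu>. \<eta> \<le> 0"
  proof (rule AE_mp, intro AE_I2 impI)
    fix \<eta> :: real assume a: "\<forall>n::nat. \<eta> \<notin> {\<eta>. 1 / Suc n \<le> \<eta>}"
    show "\<eta> \<le> 0"
    proof (rule ccontr)
      assume "\<not> \<eta> \<le> 0"
      then have "0 < \<eta>" by simp
      from ex_inverse_of_nat_less[OF this] obtain n :: nat where n: "0 < n" "inverse (real n) < \<eta>" by blast
      then obtain k where k: "n = Suc k" using gr0_implies_Suc by blast
      then have "1 / (1 + real k) \<le> \<eta>" using n by (simp add: inverse_eq_divide)
      then show False using a by auto
    qed
  qed
  have int: "integrable \<nu> (\<lambda>\<eta>. - \<eta>)" using int1 by simp
  have i0: "(\<integral>\<eta>. - \<eta> \<partial>\<nu>) = 0" using mean0 by (simp only: Bochner_Integration.integral_minus)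
  have nn: "AE \<eta> in \<nu>. 0 \<le> - \<eta>"
    by (rule AE_mp[OF le0]) (rule AE_I2, simp)
  have "AE \<eta> in \<nu>. - \<eta> = 0"
    using integral_nonneg_eq_0_iff_AE[OF int nn] i0 by blast
  then have "AE \<eta> in \<nu>. \<eta> = 0" by (rule AE_mp) (rule AE_I2, simp)
  then show False using nd by simp
qed

lemma Mg_lower_tail: assumes "0 \<le> \<theta>"
  shows "exp (\<theta> * t) * measure \<nu> {\<eta>. t \<le> \<eta>} \<le> Mg \<theta>"
proof -
  have sets: "{\<eta>. t \<le> \<eta>} \<in> sets \<nu>" using nu_sets by simp
  have fin: "emeasure \<nu> {\<eta>. t \<le> \<eta>} < \<infinity>"
    by (rule order.strict_trans1[OF prob_space.emeasure_le_1[OF nu]]) simp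
  have ii: "integrable \<nu> (\<lambda>\<eta>. indicator {\<eta>. t \<le> \<eta>} \<eta> :: real)"
    using integrable_real_indicator[OF sets fin] .
  have "(\<integral>\<eta>. exp (\<theta> * t) * (indicator {\<eta>. t \<le> \<eta>} \<eta> :: real) \<partial>\<nu>) \<le> Mg \<theta>"
    unfolding Mg_def
  proof (rule integral_mono)
    show "integrable \<nu> (\<lambda>\<eta>. exp (\<theta> * t) * (indicator {\<eta>. t \<le> \<eta>} \<eta> :: real))" using ii by simp
    show "integrable \<nu> (\<lambda>\<eta>. exp (\<theta> * \<eta>))" by (rule intexp)
    fix \<eta> show "exp (\<theta> * t) * (indicator {\<eta>. t \<le> \<eta>} \<eta> :: real) \<le> exp (\<theta> * \<eta>)"
      using assms by (cases "t \<le> \<eta>") (auto simp: mult_left_mono)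
  qed
  moreover have "(\<integral>\<eta>. exp (\<theta> * t) * (indicator {\<eta>. t \<le> \<eta>} \<eta> :: real) \<partial>\<nu>) = exp (\<theta> * t) * measure \<nu> {\<eta>. t \<le> \<eta>}"
    using Bochner_Integration.integral_indicator[of \<nu> "{\<eta>. t \<le> \<eta>}"] space_nu by simp
  ultimately show ?thesis by linarith
qed

end

context noise
begin

lemma ln_Mg_nn: "0 \<le> ln (Mg \<theta>)"
  using Mg_ge1[of \<theta>] by simp

lemma I_pos:
  assumes c: "0 < c" and tau: "0 < \<tau>"
    and max: "\<forall>\<theta>. \<theta> * c * \<tau> - ln (Mg \<theta>) \<le> \<theta>s * c * \<tau> - ln (Mg \<theta>s)"
  shows "0 < \<theta>s * c * \<tau> - ln (Mg \<theta>s)"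
proof -
  define \<theta>0 where "\<theta>0 = min 1 (c * \<tau> / (2 * (Cq + 1)))"
  have Cq: "0 \<le> Cq" by (rule Cq_nn)
  have ct: "0 < c * \<tau>" using c tau by simp
  have t0: "0 < \<theta>0" unfolding \<theta>0_def using ct Cq by simp
  have t1: "\<bar>\<theta>0\<bar> \<le> 1" unfolding \<theta>0_def using t0 \<theta>0_def by auto
  have t2: "(Cq + 1) * \<theta>0 \<le> c * \<tau> / 2"
  proof -
    have "\<theta>0 \<le> c * \<tau> / (2 * (Cq + 1))" unfolding \<theta>0_def by simp
    then have "(Cq + 1) * \<theta>0 \<le> (Cq + 1) * (c * \<tau> / (2 * (Cq + 1)))"
      using Cq by (intro mult_left_mono) auto
    also have "\<dots> = c * \<tau> / 2" using Cq by (simp add: field_simps)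
    finally show ?thesis .
  qed
  have "ln (Mg \<theta>0) \<le> ln (1 + Cq * \<theta>0\<^sup>2)"
    using Mg_upper[OF t1] Mg_pos[of \<theta>0] by simp
  also have "\<dots> \<le> Cq * \<theta>0\<^sup>2" using Cq by (intro ln_add_one_self_le_self) simp
  also have "\<dots> \<le> (Cq + 1) * \<theta>0 * \<theta>0" using t0 by (simp add: power2_eq_square mult_right_mono)
  also have "\<dots> \<le> c * \<tau> / 2 * \<theta>0" using t2 t0 by (intro mult_right_mono) auto
  finally have "ln (Mg \<theta>0) \<le> c * \<tau> / 2 * \<theta>0" .
  moreover have "0 < c * \<tau> / 2 * \<theta>0" using ct t0 by simp
  ultimately have "0 < \<theta>0 * c * \<tau> - ln (Mg \<theta>0)" by (simp add: algebra_simps)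
  then show ?thesis using max by (meson order_less_le_trans)
qed

lemma thetas_small:
  assumes nd: "\<not> (AE \<eta> in \<nu>. \<eta> = 0)" and c: "0 < c" and eps: "0 < \<epsilon>"
  shows "\<exists>\<tau>0>0. \<forall>\<tau> \<theta>s. 0 < \<tau> \<longrightarrow> \<tau> < \<tau>0 \<longrightarrow>
           (\<forall>\<theta>. \<theta> * c * \<tau> - ln (Mg \<theta>) \<le> \<theta>s * c * \<tau> - ln (Mg \<theta>s)) \<longrightarrow> \<theta>s < \<epsilon>"
proof -
  obtain t where t: "0 < t" "0 < measure \<nu> {\<eta>. t \<le> \<eta>}" using exists_tp[OF nd] by blast
  define p where "p = measure \<nu> {\<eta>. t \<le> \<eta>}"
  have p: "0 < p" using t by (simp add: p_def)
  define m where "m = ln (Mg \<epsilon>)"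
  have m: "0 < m" unfolding m_def using Mg_gt1[OF nd eps] by simp
  define T where "T = - 2 * ln p / t + \<epsilon>"
  define \<tau>0 where "\<tau>0 = min (t / (2 * c)) (m / (T * c + 1))"
  have lnp: "ln p \<le> 0"
  proof -
    have "p \<le> 1" unfolding p_def using nu by (simp add: prob_space.prob_le_1)
    then show ?thesis using p by simp
  qed
  have T: "0 < T"
  proof -
    have "0 \<le> - 2 * ln p / t" using lnp t by (intro divide_nonneg_pos) auto
    then show ?thesis unfolding T_def using eps by linarith
  qed
  have tau0: "0 < \<tau>0" unfolding \<tau>0_def using t c m T by (simp add: add_pos_pos)
  show ?thesis
  proof (intro exI[of _ \<tau>0] conjI tau0 allI impI)
    fix \<tau> \<theta>s assume tau: "0 < \<tau>" "\<tau> < \<tau>0"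
      and max: "\<forall>\<theta>. \<theta> * c * \<tau> - ln (Mg \<theta>) \<le> \<theta>s * c * \<tau> - ln (Mg \<theta>s)"
    have I: "ln (Mg \<theta>s) < \<theta>s * c * \<tau>" using I_pos[OF c tau(1) max] by simp
    show "\<theta>s < \<epsilon>"
    proof (rule ccontr)
      assume "\<not> \<theta>s < \<epsilon>"
      then have ge: "\<epsilon> \<le> \<theta>s" by simp
      have ts0: "0 \<le> \<theta>s" using ge eps by simp
      have "ln (exp (\<theta>s * t) * p) \<le> ln (Mg \<theta>s)"
        using Mg_lower_tail[OF ts0, of t] p Mg_pos[of \<theta>s] by (simp add: p_def)
      then have l1: "\<theta>s * t + ln p \<le> ln (Mg \<theta>s)" using p by (simp add: ln_mult)
      have ct: "c * \<tau> < t / 2"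
      proof -
        have "\<tau> < t / (2 * c)" using tau unfolding \<tau>0_def by simp
        then have "\<tau> * (2 * c) < t" using c by (simp add: pos_less_divide_eq)
        then show ?thesis by (simp add: algebra_simps)
      qed
      have "\<theta>s * t < - ln p + \<theta>s * c * \<tau>" using l1 I by linarith
      moreover have "\<theta>s * c * \<tau> \<le> \<theta>s * (t / 2)" using ct ts0
        by (simp add: mult.assoc mult_left_mono less_imp_le)
      ultimately have "\<theta>s * t / 2 < - ln p" by simp
      then have "\<theta>s < - 2 * ln p / t" using t by (simp add: field_simps)
      then have ts: "\<theta>s < T" unfolding T_def using eps by simp
      have c1: "m \<le> ln (Mg \<theta>s)" unfolding m_def using Mg_mono[of \<epsilon> \<theta>s] eps ge Mg_pos[of \<epsilon>] by simp
      have c3: "\<theta>s * c * \<tau> \<le> T * c * \<tau>" using ts c tau by (simp add: less_imp_le mult_right_mono)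
      have tl: "\<tau> \<le> m / (T * c + 1)" using tau unfolding \<tau>0_def by simp
      have Tc: "0 \<le> T * c" using T c by simp
      have c4: "T * c * \<tau> \<le> T * c * (m / (T * c + 1))" using tl Tc by (metis mult_left_mono)
      have d: "0 < T * c + 1" using T c by (simp add: add_pos_pos)
      have c5: "T * c * (m / (T * c + 1)) = m - m / (T * c + 1)" using d by (simp add: field_simps)
      have c6: "0 < m / (T * c + 1)" using m d by simp
      show False using c1 I c3 c4 c5 c6 by linarith
    qed
  qed
qed

end

lemma sw_props:
  fixes Sa Sb :: "real measure"
  assumes Sa: "prob_space Sa" "sets Sa = sets borel"
    and Sb: "prob_space Sb" "sets Sb = sets borel"
  shows "0 < sw Sa Sb tau N \<and> sw Sa Sb tau N \<le> 1"
proof -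
  define Q where "Q = PiM {..<N} (\<lambda>_. Sa) \<Otimes>\<^sub>M PiM {..<N} (\<lambda>_. Sb)"
  have pa: "prob_space (PiM {..<N} (\<lambda>_. Sa))" using Sa by (intro prob_space_PiM) auto
  have pb: "prob_space (PiM {..<N} (\<lambda>_. Sb))" using Sb by (intro prob_space_PiM) auto
  have Q: "prob_space Q" unfolding Q_def by (rule prob_space_pair[OF pa pb])
  interpret Q: prob_space Q by (rule Q)
  have ma[measurable]: "(\<lambda>x. \<Sum>k<N. x k) \<in> borel_measurable (PiM {..<N} (\<lambda>_. Sa))"
    by (rule sum_comp_meas[OF Sa(2)])
  have mb[measurable]: "(\<lambda>x. \<Sum>k<N. x k) \<in> borel_measurable (PiM {..<N} (\<lambda>_. Sb))"
    by (rule sum_comp_meas[OF Sb(2)])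
  define g where "g = (\<lambda>\<omega>::(nat\<Rightarrow>real)\<times>(nat\<Rightarrow>real). 1 / (1 + exp (((\<Sum>k<N. fst \<omega> k) / real N - (\<Sum>k<N. snd \<omega> k) / real N) / tau)))"
  have mg[measurable]: "g \<in> borel_measurable Q" unfolding g_def Q_def by measurable
  have gb: "0 < g \<omega> \<and> g \<omega> \<le> 1" for \<omega>
    unfolding g_def by (simp add: add_pos_pos)
  have ig: "integrable Q g"
    by (rule Q.integrable_const_bound[where B=1]) (use gb in \<open>auto simp: less_imp_le\<close>)
  have "0 < integral\<^sup>L Q g" by (rule int_pos_prob[OF Q ig]) (use gb in auto)
  moreover have "integral\<^sup>L Q g \<le> integral\<^sup>L Q (\<lambda>_. 1)"
    by (rule integral_mono[OF ig]) (use gb in auto)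
  moreover have "sw Sa Sb tau N = integral\<^sup>L Q g" unfolding sw_def g_def Q_def by simp
  ultimately show ?thesis using Q.prob_space by simp
qed

lemma switch_sw: "switch_prob S tau N i a b = sw (S i a) (S i b) tau N"
  unfolding switch_prob_def sw_def by simp

lemma prof_upd: "a \<in> profiles Xs \<Longrightarrow> x \<in> Xs i \<Longrightarrow> a(i := x) \<in> profiles Xs"
  unfolding profiles_def by (auto simp: PiE_def extensional_def)

lemma prof_mem: "a \<in> profiles Xs \<Longrightarrow> a i \<in> Xs i"
  unfolding profiles_def by auto

lemma finite_prof:
  fixes Xs :: "'p::finite \<Rightarrow> 'b set"
  assumes "\<forall>i. finite (Xs i)" shows "finite (profiles Xs)"
  unfolding profiles_def using assms by (intro finite_PiE) auto

locale blla =
  fixes Xs :: "'p::finite \<Rightarrow> 'b set" and S :: "'p \<Rightarrow> ('p \<Rightarrow> 'b) \<Rightarrow> real measure"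
  assumes fin: "\<forall>i. finite (Xs i) \<and> Xs i \<noteq> {}"
    and sp: "\<forall>i. \<forall>a\<in>profiles Xs. prob_space (S i a) \<and> sets (S i a) = sets borel"
begin

lemma sp_props:
  assumes "a \<in> profiles Xs" "b \<in> profiles Xs"
  shows "0 < switch_prob S tau N i a b \<and> switch_prob S tau N i a b \<le> 1"
  unfolding switch_sw using sp assms by (intro sw_props) auto

lemma finX: "finite (profiles Xs)" using finite_prof fin by blast

lemma card_pos: "0 < card (Xs i)" using fin by (simp add: card_gt_0_iff)

lemma trans_offdiag:
  assumes a: "a \<in> profiles Xs" and b: "b \<in> profiles Xs" and ab: "a \<noteq> b"
  shows "blla_trans Xs S tau N a b = (\<Sum>i\<in>UNIV. (1 / real CARD('p)) * ((1 / real (card (Xs i))) *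
           (if b = a(i := b i) then switch_prob S tau N i a b else 0)))"
  unfolding blla_trans_def
proof (intro sum.cong refl arg_cong2[where f="(*)"])
  fix i
  have eq: "(if a(i := x) = b then switch_prob S tau N i a (a(i := x)) else 0)
      = (if b i = x then (if b = a(i := b i) then switch_prob S tau N i a b else 0) else 0)" for x
  proof (cases "a(i := x) = b")
    case True
    then have "b i = x" "b = a(i := b i)" by auto
    then show ?thesis using True by simp
  next
    case False
    have "\<not> (b i = x \<and> b = a(i := b i))"
    proof
      assume "b i = x \<and> b = a(i := b i)"
      then have "a(i := x) = b" by auto
      then show False using False by simp
    qed
    then show ?thesis using False by auto
  qed
  have "(\<Sum>x\<in>Xs i. 1 / real (card (Xs i)) *
          ((if a(i := x) = b then switch_prob S tau N i a (a(i := x)) else 0) +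
           (if a = b then 1 - switch_prob S tau N i a (a(i := x)) else 0)))
      = (\<Sum>x\<in>Xs i. (if b i = x then 1 / real (card (Xs i)) * (if b = a(i := b i) then switch_prob S tau N i a b else 0) else 0))"
    using ab by (intro sum.cong refl) (simp add: eq)
  also have "\<dots> = 1 / real (card (Xs i)) * (if b = a(i := b i) then switch_prob S tau N i a b else 0)"
    using fin prof_mem[OF b, of i] by simp
  finally show "(\<Sum>x\<in>Xs i. 1 / real (card (Xs i)) *
          ((if a(i := x) = b then switch_prob S tau N i a (a(i := x)) else 0) +
           (if a = b then 1 - switch_prob S tau N i a (a(i := x)) else 0)))
      = 1 / real (card (Xs i)) * (if b = a(i := b i) then switch_prob S tau N i a b else 0)" .
qed

lemma trans_nonneg:
  assumes a: "a \<in> profiles Xs" and b: "b \<in> profiles Xs"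
  shows "0 \<le> blla_trans Xs S tau N a b"
  unfolding blla_trans_def
proof (intro sum_nonneg mult_nonneg_nonneg add_nonneg_nonneg)
  fix i x assume x: "x \<in> Xs i"
  have "0 < switch_prob S tau N i a (a(i := x)) \<and> switch_prob S tau N i a (a(i := x)) \<le> 1"
    using sp_props[OF a prof_upd[OF a x]] .
  then show "0 \<le> (if a(i := x) = b then switch_prob S tau N i a (a(i := x)) else 0)"
    and "0 \<le> (if a = b then 1 - switch_prob S tau N i a (a(i := x)) else 0)" by auto
qed auto

lemma row_sum:
  assumes a: "a \<in> profiles Xs"
  shows "(\<Sum>b\<in>profiles Xs. blla_trans Xs S tau N a b) = 1"
proof -
  have inner: "(\<Sum>b\<in>profiles Xs. ((if a(i := x) = b then switch_prob S tau N i a (a(i := x)) else 0)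
           + (if a = b then 1 - switch_prob S tau N i a (a(i := x)) else 0))) = 1"
    if x: "x \<in> Xs i" for i x
    using finX prof_upd[OF a x] a by (simp add: sum.distrib)
  have "(\<Sum>b\<in>profiles Xs. blla_trans Xs S tau N a b)
      = (\<Sum>i\<in>UNIV. (1 / real CARD('p)) * (\<Sum>x\<in>Xs i. (1 / real (card (Xs i))) *
          (\<Sum>b\<in>profiles Xs. ((if a(i := x) = b then switch_prob S tau N i a (a(i := x)) else 0)
           + (if a = b then 1 - switch_prob S tau N i a (a(i := x)) else 0)))))"
    unfolding blla_trans_def
    by (subst sum.swap) (simp add: sum_distrib_left sum.swap[of _ "profiles Xs"])
  also have "\<dots> = (\<Sum>i\<in>UNIV. (1 / real CARD('p)) * (\<Sum>x\<in>Xs i. (1 / real (card (Xs i)))))"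
    using inner by simp
  also have "\<dots> = (\<Sum>i\<in>(UNIV::'p set). 1 / real CARD('p))"
  proof -
    have c: "(\<Sum>x\<in>Xs i. 1 / real (card (Xs i))) = 1" for i
    proof -
      have "card (Xs i) \<noteq> 0" using card_pos[of i] by simp
      then show ?thesis by simp
    qed
    show ?thesis by (simp only: c mult_1_right)
  qed
  also have "\<dots> = 1" by simp
  finally show ?thesis .
qed

end

context blla
begin

lemma kcond:
  assumes K: "0 \<le> K"
    and pair: "\<And>i a x. a \<in> profiles Xs \<Longrightarrow> x \<in> Xs i \<Longrightarrow> x \<noteq> a i \<Longrightarrow>
        \<pi> a * switch_prob S tau N i a (a(i := x)) \<le> K * (\<pi> (a(i := x)) * switch_prob S tau N i (a(i := x)) a)"
    and a: "a \<in> profiles Xs" and b: "b \<in> profiles Xs" and ab: "a \<noteq> b"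
  shows "\<pi> a * blla_trans Xs S tau N a b \<le> K * (\<pi> b * blla_trans Xs S tau N b a)"
proof -
  have "\<pi> a * blla_trans Xs S tau N a b = (\<Sum>i\<in>UNIV. (1 / real CARD('p)) * ((1 / real (card (Xs i))) *
           (if b = a(i := b i) then \<pi> a * switch_prob S tau N i a b else 0)))"
    unfolding trans_offdiag[OF a b ab] sum_distrib_left by (rule sum.cong[OF refl]) auto
  also have "\<dots> \<le> (\<Sum>i\<in>UNIV. (1 / real CARD('p)) * ((1 / real (card (Xs i))) *
           (if a = b(i := a i) then K * (\<pi> b * switch_prob S tau N i b a) else 0)))"
  proof (rule sum_mono, intro mult_left_mono)
    fix i
    show "(if b = a(i := b i) then \<pi> a * switch_prob S tau N i a b else 0)
        \<le> (if a = b(i := a i) then K * (\<pi> b * switch_prob S tau N i b a) else 0)"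
    proof (cases "b = a(i := b i)")
      case True
      have bj: "b j = a j" if "j \<noteq> i" for j using fun_cong[OF True, of j] that by simp
      have ba: "a = b(i := a i)"
      proof (rule ext)
        fix j show "a j = (b(i := a i)) j" using bj[of j] by (cases "j = i") auto
      qed
      have x: "b i \<in> Xs i" using prof_mem[OF b] .
      have xne: "b i \<noteq> a i"
      proof
        assume "b i = a i"
        then have "a = b" using bj by (intro ext) (case_tac "x = i", auto)
        then show False using ab by simp
      qed
      have "\<pi> a * switch_prob S tau N i a (a(i := b i)) \<le> K * (\<pi> (a(i := b i)) * switch_prob S tau N i (a(i := b i)) a)"
        by (rule pair[OF a x xne])
      then show ?thesis using True ba by simp
    next
      case False
      have "\<not> a = b(i := a i)"
      proof
        assume A: "a = b(i := a i)"
        have aj: "a j = b j" if "j \<noteq> i" for j using fun_cong[OF A, of j] that by simp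
        have "b = a(i := b i)"
        proof (rule ext)
          fix j show "b j = (a(i := b i)) j" using aj[of j] by (cases "j = i") auto
        qed
        then show False using False by simp
      qed
      then show ?thesis using False by simp
    qed
  qed auto
  also have "\<dots> = K * (\<pi> b * blla_trans Xs S tau N b a)"
    unfolding trans_offdiag[OF b a ab[symmetric]] sum_distrib_left by (rule sum.cong[OF refl]) auto
  finally show ?thesis .
qed

lemma edge_pos:
  assumes a: "a \<in> profiles Xs" and x: "x \<in> Xs i" and xne: "x \<noteq> a i"
  shows "0 < blla_trans Xs S tau N a (a(i := x))"
proof -
  have b: "a(i := x) \<in> profiles Xs" by (rule prof_upd[OF a x])
  have ab: "a \<noteq> a(i := x)"
  proof
    assume A: "a = a(i := x)"
    have "a i = x" using fun_cong[OF A, of i] by simp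
    then show False using xne by simp
  qed
  define f where "f = (\<lambda>j. 1 / real CARD('p) * (1 / real (card (Xs j)) *
       (if a(i := x) = a(j := (a(i := x)) j) then switch_prob S tau N j a (a(i := x)) else 0)))"
  have nn: "0 \<le> f j" for j
  proof -
    have s0: "0 \<le> switch_prob S tau N j a (a(i := x))" using sp_props[OF a b, of tau N j] by (simp add: less_imp_le)
    have "0 \<le> (if C then switch_prob S tau N j a (a(i := x)) else 0)" for C using s0 by simp
    then show ?thesis unfolding f_def by (intro mult_nonneg_nonneg) auto
  qed
  have pos: "0 < f i"
  proof -
    have "0 < switch_prob S tau N i a (a(i := x))" using sp_props[OF a b, of tau N i] by simp
    moreover have "a(i := x) = a(i := (a(i := x)) i)" by simp
    ultimately show ?thesis unfolding f_def using card_pos[of i] by (simp only: if_True) simp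
  qed
  have "0 < sum f UNIV" by (rule sum_pos2[of UNIV i f]) (use nn pos in auto)
  then show ?thesis unfolding trans_offdiag[OF a b ab] f_def .
qed

lemma conn_aux:
  assumes b: "b \<in> profiles Xs"
  shows "\<forall>a. a \<in> profiles Xs \<longrightarrow> card {i. a i \<noteq> b i} = n \<longrightarrow>
           (a, b) \<in> (edgs (profiles Xs) (blla_trans Xs S tau N))\<^sup>*"
proof (induction n)
  case 0
  show ?case
  proof (intro allI impI)
    fix a assume "a \<in> profiles Xs" "card {i. a i \<noteq> b i} = 0"
    then have "{i. a i \<noteq> b i} = {}" by simp
    then have "a = b" by (auto simp: fun_eq_iff)
    then show "(a, b) \<in> (edgs (profiles Xs) (blla_trans Xs S tau N))\<^sup>*" by simp
  qed
next
  case (Suc n)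
  show ?case
  proof (intro allI impI)
    fix a assume a: "a \<in> profiles Xs" and c: "card {i. a i \<noteq> b i} = Suc n"
    have ne: "{i. a i \<noteq> b i} \<noteq> {}"
    proof
      assume "{i. a i \<noteq> b i} = {}"
      then show False using c by simp
    qed
    then obtain i where i: "a i \<noteq> b i" by blast
    define a' where "a' = a(i := b i)"
    have a': "a' \<in> profiles Xs" unfolding a'_def by (rule prof_upd[OF a prof_mem[OF b]])
    have "{j. a' j \<noteq> b j} = {j. a j \<noteq> b j} - {i}" unfolding a'_def by auto
    then have "card {j. a' j \<noteq> b j} = n" using c i by simp
    then have r: "(a', b) \<in> (edgs (profiles Xs) (blla_trans Xs S tau N))\<^sup>*" using Suc.IH a' by blast
    have "0 < blla_trans Xs S tau N a a'"
      unfolding a'_def by (rule edge_pos[OF a prof_mem[OF b]]) (use i in simp)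
    moreover have "a \<noteq> a'"
    proof
      assume A: "a = a'"
      have "a i = b i" using fun_cong[OF A, of i] unfolding a'_def by simp
      then show False using i by simp
    qed
    ultimately have "(a, a') \<in> edgs (profiles Xs) (blla_trans Xs S tau N)"
      using a a' by (simp add: edgs_def)
    then show "(a, b) \<in> (edgs (profiles Xs) (blla_trans Xs S tau N))\<^sup>*"
      using r by (meson converse_rtrancl_into_rtrancl)
  qed
qed

lemma conn:
  "\<forall>a\<in>profiles Xs. \<forall>b\<in>profiles Xs. (a, b) \<in> (edgs (profiles Xs) (blla_trans Xs S tau N))\<^sup>*"
  using conn_aux by blast

end

lemma mean0_gen:
  fixes Sa Sb :: "real measure"
  assumes Sa: "prob_space Sa" "sets Sa = sets borel" "integrable Sa (\<lambda>y. y)"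
    and Sb: "prob_space Sb" "sets Sb = sets borel" "integrable Sb (\<lambda>y. y)"
    and D: "D = (\<integral>y. y \<partial>Sa) - (\<integral>y. y \<partial>Sb)"
    and intnu: "integrable (distr (Sa \<Otimes>\<^sub>M Sb) borel (\<lambda>(y, z). y - z - D)) (\<lambda>\<eta>. \<eta>)"
  shows "(\<integral>\<eta>. \<eta> \<partial>distr (Sa \<Otimes>\<^sub>M Sb) borel (\<lambda>(y, z). y - z - D)) = 0"
proof -
  interpret pair_sigma_finite Sa Sb
    using Sa Sb by (simp add: pair_sigma_finite_def prob_space_imp_sigma_finite)
  interpret Sb: prob_space Sb by (rule Sb(1))
  interpret Sa: prob_space Sa by (rule Sa(1))
  have mm: "(\<lambda>(y, z). y - z - D) \<in> measurable (Sa \<Otimes>\<^sub>M Sb) borel"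
    unfolding measurable_cong_sets[OF sets_pair_measure_cong[OF Sa(2) Sb(2)] refl] by measurable
  have intp: "integrable (Sa \<Otimes>\<^sub>M Sb) (\<lambda>(y, z). y - z - D)"
    using intnu integrable_distr_eq[OF mm, of "\<lambda>\<eta>. \<eta>"] by simp
  have "(\<integral>\<eta>. \<eta> \<partial>distr (Sa \<Otimes>\<^sub>M Sb) borel (\<lambda>(y, z). y - z - D))
      = (\<integral>\<omega>. (\<lambda>(y, z). y - z - D) \<omega> \<partial>(Sa \<Otimes>\<^sub>M Sb))"
    by (rule integral_distr[OF mm]) simp
  also have "\<dots> = (\<integral>y. (\<integral>z. y - z - D \<partial>Sb) \<partial>Sa)"
    using integral_fst'[OF intp] by simp
  also have "\<dots> = (\<integral>y. y - (\<integral>z. z \<partial>Sb) - D \<partial>Sa)"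
  proof (rule Bochner_Integration.integral_cong[OF refl])
    fix y
    have "(\<integral>z. y - z - D \<partial>Sb) = (\<integral>z. (y - D) - z \<partial>Sb)" by (simp add: algebra_simps)
    also have "\<dots> = (\<integral>z. (y - D) \<partial>Sb) - (\<integral>z. z \<partial>Sb)"
      by (rule Bochner_Integration.integral_diff) (use Sb(3) in auto)
    also have "\<dots> = y - D - (\<integral>z. z \<partial>Sb)" using Sb.prob_space by simp
    finally show "(\<integral>z. y - z - D \<partial>Sb) = y - (\<integral>z. z \<partial>Sb) - D" by simp
  qed
  also have "\<dots> = (\<integral>y. y \<partial>Sa) - (\<integral>z. z \<partial>Sb) - D"
  proof -
    have "(\<integral>y. y - ((\<integral>z. z \<partial>Sb) + D) \<partial>Sa) = (\<integral>y. y \<partial>Sa) - (\<integral>y. ((\<integral>z. z \<partial>Sb) + D) \<partial>Sa)"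
      by (rule Bochner_Integration.integral_diff) (use Sa(3) in auto)
    then show ?thesis using Sa.prob_space by (simp add: algebra_simps)
  qed
  also have "\<dots> = 0" using D by simp
  finally show ?thesis .
qed

context blla
begin

lemma noise_pair:
  fixes U :: "'p \<Rightarrow> ('p \<Rightarrow> 'b) \<Rightarrow> real"
  assumes a: "a \<in> profiles Xs" and b: "b \<in> profiles Xs"
    and samples: "\<forall>i. \<forall>a\<in>profiles Xs. prob_space (S i a) \<and> sets (S i a) = sets borel
                    \<and> integrable (S i a) (\<lambda>y. y) \<and> (\<integral>y. y \<partial>S i a) = U i a"
    and i1: "integrable (noise_dist S U i a b) (\<lambda>\<eta>. \<eta>)"
    and ie: "\<And>\<theta>. integrable (noise_dist S U i a b) (\<lambda>\<eta>. exp (\<theta> * \<eta>))"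
  shows "noise (noise_dist S U i a b)"
proof (rule noise.intro)
  have Sa: "prob_space (S i a)" "sets (S i a) = sets borel" "integrable (S i a) (\<lambda>y. y)" "(\<integral>y. y \<partial>S i a) = U i a"
    using samples a by auto
  have Sb: "prob_space (S i b)" "sets (S i b) = sets borel" "integrable (S i b) (\<lambda>y. y)" "(\<integral>y. y \<partial>S i b) = U i b"
    using samples b by auto
  have mm: "(\<lambda>(y, z). y - z - (U i a - U i b)) \<in> measurable (S i a \<Otimes>\<^sub>M S i b) borel"
    unfolding measurable_cong_sets[OF sets_pair_measure_cong[OF Sa(2) Sb(2)] refl] by measurable
  show "prob_space (noise_dist S U i a b)"
    unfolding noise_dist_def
    by (rule prob_space.prob_space_distr[OF prob_space_pair[OF Sa(1) Sb(1)] mm])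
  show "sets (noise_dist S U i a b) = sets borel" unfolding noise_dist_def by simp
  show "integrable (noise_dist S U i a b) (\<lambda>\<eta>. \<eta>)" by (rule i1)
  show "\<And>\<theta>. integrable (noise_dist S U i a b) (\<lambda>\<eta>. exp (\<theta> * \<eta>))" by (rule ie)
  show "(\<integral>\<eta>. \<eta> \<partial>noise_dist S U i a b) = 0"
    unfolding noise_dist_def
    by (rule mean0_gen[OF Sa(1-3) Sb(1-3)]) (use Sa(4) Sb(4) i1 in \<open>auto simp: noise_dist_def\<close>)
qed

lemma pair_bound:
  fixes U :: "'p \<Rightarrow> ('p \<Rightarrow> 'b) \<Rightarrow> real" and phi :: "('p \<Rightarrow> 'b) \<Rightarrow> real"
  assumes a: "a \<in> profiles Xs" and x: "x \<in> Xs i"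
    and pot: "is_potential_game Xs U phi"
    and nz: "noise (noise_dist S U i a (a(i := x)))"
    and tau: "0 < tau" and N: "1 \<le> N"
  shows "exp (phi a / tau) * switch_prob S tau N i a (a(i := x))
     \<le> noise.Mg (noise_dist S U i a (a(i := x))) (- 1 / (real N * tau)) ^ N
        * (exp (phi (a(i := x)) / tau) * switch_prob S tau N i (a(i := x)) a)"
proof -
  interpret nz: noise "noise_dist S U i a (a(i := x))" by (rule nz)
  define b where "b = a(i := x)"
  have b: "b \<in> profiles Xs" unfolding b_def by (rule prof_upd[OF a x])
  have ba: "b(i := a i) = a" unfolding b_def by simp
  have Sa: "prob_space (S i a)" "sets (S i a) = sets borel" using sp a by auto
  have Sb: "prob_space (S i b)" "sets (S i b) = sets borel" using sp b by auto
  define D where "D = U i a - U i b"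
  have Dphi: "D = phi a - phi b"
  proof -
    have "U i (a(i := a i)) - U i (a(i := x)) = phi (a(i := a i)) - phi (a(i := x))"
      using pot a x prof_mem[OF a, of i] unfolding is_potential_game_def by blast
    then show ?thesis unfolding D_def b_def by simp
  qed
  have fin: "(\<integral>\<^sup>+\<eta>. ennreal (exp ((- 1 / (real N * tau)) * \<eta>)) \<partial>distr (S i a \<Otimes>\<^sub>M S i b) borel (\<lambda>(y, z). y - z - D))
      = ennreal (nz.Mg (- 1 / (real N * tau)))"
    using nz.Mg_nn[of "- 1 / (real N * tau)"] unfolding noise_dist_def D_def b_def by simp
  have m0: "0 \<le> nz.Mg (- 1 / (real N * tau))" using nz.Mg_pos by (simp add: less_imp_le)
  have key: "exp (D / tau) * sw (S i a) (S i b) tau N \<le> nz.Mg (- 1 / (real N * tau)) ^ N * sw (S i b) (S i a) tau N"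
    by (rule switch_ineq[OF Sa Sb tau N m0 fin])
  have e: "exp (phi a / tau) = exp (phi b / tau) * exp (D / tau)"
    unfolding Dphi by (simp add: exp_add[symmetric] diff_divide_distrib)
  have "exp (phi a / tau) * switch_prob S tau N i a b = exp (phi b / tau) * (exp (D / tau) * sw (S i a) (S i b) tau N)"
    unfolding e switch_sw by simp
  also have "\<dots> \<le> exp (phi b / tau) * (nz.Mg (- 1 / (real N * tau)) ^ N * sw (S i b) (S i a) tau N)"
    by (rule mult_left_mono[OF key]) simp
  also have "\<dots> = nz.Mg (- 1 / (real N * tau)) ^ N * (exp (phi b / tau) * switch_prob S tau N i b a)"
    unfolding switch_sw by simp
  finally show ?thesis unfolding b_def by simp
qed

end

lemma ev_pos: "eventually (\<lambda>\<tau>::real. 0 < \<tau>) (at_right 0)"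
  by (rule eventually_at_right_less)

lemma ev_lt: "0 < (b::real) \<Longrightarrow> eventually (\<lambda>\<tau>. \<tau> < b) (at_right 0)"
  unfolding eventually_at_right_field by auto

lemma rate_case1:
  fixes Nf :: "real \<Rightarrow> nat" and \<xi> ell :: real
  assumes ell: "0 < ell" and xi: "0 < \<xi>" "\<xi> < 1" and Npos: "\<forall>tau>0. 1 \<le> Nf tau"
    and Nb: "\<forall>tau>0. real (Nf tau) \<ge> (ln (4 / \<xi>) + 2 / tau) * ell\<^sup>2 / (2 * (1 - \<xi>)\<^sup>2 * tau\<^sup>2)"
  shows "((\<lambda>\<tau>. 1 / (real (Nf \<tau>) * \<tau>\<^sup>2)) \<longlongrightarrow> 0) (at_right 0)"
proof (rule tendsto_sandwich[where f="\<lambda>_. 0" and h="\<lambda>\<tau>. (1 - \<xi>)\<^sup>2 / ell\<^sup>2 * \<tau>"])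
  define q where "q = (1 - \<xi>)\<^sup>2"
  have q: "0 < q" unfolding q_def using xi by simp
  have l4: "0 \<le> ln (4 / \<xi>)" using xi by simp
  show "eventually (\<lambda>\<tau>. 0 \<le> 1 / (real (Nf \<tau>) * \<tau>\<^sup>2)) (at_right 0)"
    using ev_pos by eventually_elim simp
  show "eventually (\<lambda>\<tau>. 1 / (real (Nf \<tau>) * \<tau>\<^sup>2) \<le> (1 - \<xi>)\<^sup>2 / ell\<^sup>2 * \<tau>) (at_right 0)"
    using ev_pos
  proof eventually_elim
    fix \<tau> :: real assume t: "0 < \<tau>"
    have "ell\<^sup>2 / (q * \<tau> ^ 3) = (2 / \<tau>) * ell\<^sup>2 / (2 * q * \<tau>\<^sup>2)"
      using t q by (simp add: field_simps power2_eq_square power3_eq_cube)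
    also have "\<dots> \<le> (ln (4 / \<xi>) + 2 / \<tau>) * ell\<^sup>2 / (2 * q * \<tau>\<^sup>2)"
      using l4 t q by (intro divide_right_mono mult_right_mono) auto
    also have "\<dots> \<le> real (Nf \<tau>)" using Nb t unfolding q_def by auto
    finally have n1: "ell\<^sup>2 / (q * \<tau> ^ 3) \<le> real (Nf \<tau>)" .
    have p1: "0 < ell\<^sup>2 / (q * \<tau> ^ 3)" using ell q t by simp
    have "ell\<^sup>2 / (q * \<tau> ^ 3) * \<tau>\<^sup>2 \<le> real (Nf \<tau>) * \<tau>\<^sup>2"
      using n1 by (intro mult_right_mono) auto
    moreover have "0 < Nf \<tau>" using Npos t by (metis less_le_trans zero_less_one)
    ultimately have "1 / (real (Nf \<tau>) * \<tau>\<^sup>2) \<le> 1 / (ell\<^sup>2 / (q * \<tau> ^ 3) * \<tau>\<^sup>2)"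
      using p1 t by (intro divide_left_mono mult_pos_pos) auto
    also have "\<dots> = q / ell\<^sup>2 * \<tau>" using t ell q by (simp add: field_simps power2_eq_square power3_eq_cube)
    finally show "1 / (real (Nf \<tau>) * \<tau>\<^sup>2) \<le> (1 - \<xi>)\<^sup>2 / ell\<^sup>2 * \<tau>" unfolding q_def .
  qed
  show "((\<lambda>_. 0) \<longlongrightarrow> (0::real)) (at_right 0)" by simp
  have "((\<lambda>\<tau>. (1 - \<xi>)\<^sup>2 / ell\<^sup>2 * \<tau>) \<longlongrightarrow> (1 - \<xi>)\<^sup>2 / ell\<^sup>2 * 0) (at_right 0)"
    by (intro tendsto_intros)
  then show "((\<lambda>\<tau>. (1 - \<xi>)\<^sup>2 / ell\<^sup>2 * \<tau>) \<longlongrightarrow> 0) (at_right 0)" by simp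
qed

context noise
begin

lemma term_degen: "AE \<eta> in \<nu>. \<eta> = 0 \<Longrightarrow> max 0 (Mg \<theta> ^ N - 1) = 0"
  using Mg_degen by simp

lemma term_lim:
  fixes Nf :: "real \<Rightarrow> nat"
  assumes Npos: "\<forall>tau>0. 1 \<le> Nf tau"
    and rate: "((\<lambda>\<tau>. 1 / (real (Nf \<tau>) * \<tau>\<^sup>2)) \<longlongrightarrow> 0) (at_right 0)"
  shows "((\<lambda>\<tau>. max 0 (Mg (- 1 / (real (Nf \<tau>) * \<tau>)) ^ Nf \<tau> - 1)) \<longlongrightarrow> 0) (at_right 0)"
proof (rule tendsto_sandwich[where f="\<lambda>_. 0" and h="\<lambda>\<tau>. exp (Cq * (1 / (real (Nf \<tau>) * \<tau>\<^sup>2))) - 1"])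
  show "eventually (\<lambda>\<tau>. 0 \<le> max 0 (Mg (- 1 / (real (Nf \<tau>) * \<tau>)) ^ Nf \<tau> - 1)) (at_right 0)" by simp
  have ev1: "eventually (\<lambda>\<tau>. 1 / (real (Nf \<tau>) * \<tau>\<^sup>2) < 1) (at_right 0)"
    using order_tendstoD(2)[OF rate, of 1] by simp
  show "eventually (\<lambda>\<tau>. max 0 (Mg (- 1 / (real (Nf \<tau>) * \<tau>)) ^ Nf \<tau> - 1)
        \<le> exp (Cq * (1 / (real (Nf \<tau>) * \<tau>\<^sup>2))) - 1) (at_right 0)"
    using ev1 ev_pos ev_lt[OF zero_less_one]
  proof eventually_elim
    fix \<tau> :: real assume a: "1 / (real (Nf \<tau>) * \<tau>\<^sup>2) < 1" "0 < \<tau>" "\<tau> < 1"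
    have N1: "1 \<le> Nf \<tau>" using Npos a by auto
    have Np: "0 < real (Nf \<tau>)" using N1 by simp
    have "1 < real (Nf \<tau>) * \<tau>\<^sup>2"
    proof -
      have "0 < real (Nf \<tau>) * \<tau>\<^sup>2" using Np a by simp
      then show ?thesis using a(1) by (simp add: divide_less_eq)
    qed
    also have "real (Nf \<tau>) * \<tau>\<^sup>2 \<le> real (Nf \<tau>) * \<tau>"
      using a Np by (simp add: power2_eq_square mult_left_le_one_le mult_left_mono)
    finally have big: "1 \<le> real (Nf \<tau>) * \<tau>" by simp
    have "Mg (- 1 / (real (Nf \<tau>) * \<tau>)) ^ Nf \<tau> \<le> exp (Cq / (real (Nf \<tau>) * \<tau>\<^sup>2))"
      by (rule Mg_pow_bound[OF N1 a(2) big])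
    moreover have "0 \<le> exp (Cq * (1 / (real (Nf \<tau>) * \<tau>\<^sup>2))) - 1"
      using Cq_nn Np a by (simp add: divide_nonneg_pos)
    ultimately show "max 0 (Mg (- 1 / (real (Nf \<tau>) * \<tau>)) ^ Nf \<tau> - 1)
        \<le> exp (Cq * (1 / (real (Nf \<tau>) * \<tau>\<^sup>2))) - 1" by simp
  qed
  show "((\<lambda>_. 0) \<longlongrightarrow> (0::real)) (at_right 0)" by simp
  have "((\<lambda>\<tau>. exp (Cq * (1 / (real (Nf \<tau>) * \<tau>\<^sup>2))) - 1) \<longlongrightarrow> exp (Cq * 0) - 1) (at_right 0)"
    by (intro tendsto_intros rate)
  then show "((\<lambda>\<tau>. exp (Cq * (1 / (real (Nf \<tau>) * \<tau>\<^sup>2))) - 1) \<longlongrightarrow> 0) (at_right 0)" by simp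
qed

lemma rate_case2:
  fixes Nf :: "real \<Rightarrow> nat" and M \<theta>s :: "real \<Rightarrow> real"
  assumes nd: "\<not> (AE \<eta> in \<nu>. \<eta> = 0)" and xi: "0 < \<xi>" "\<xi> < 1"
    and Npos: "\<forall>tau>0. 1 \<le> Nf tau"
    and MM: "\<And>\<theta>. M \<theta> = Mg \<theta>"
    and max: "\<forall>tau>0. \<forall>\<theta>. \<theta> * (1 - \<xi>) * tau - ln (M \<theta>) \<le> \<theta>s tau * (1 - \<xi>) * tau - ln (M (\<theta>s tau))"
    and Nb: "\<forall>tau>0. real (Nf tau) \<ge> (ln (4 / \<xi>) + 2 / tau) / ln (exp (\<theta>s tau * (1 - \<xi>) * tau) / M (\<theta>s tau))"
  shows "((\<lambda>\<tau>. 1 / (real (Nf \<tau>) * \<tau>\<^sup>2)) \<longlongrightarrow> 0) (at_right 0)"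
proof (rule order_tendstoI)
  fix l :: real assume l: "l < 0"
  show "eventually (\<lambda>\<tau>. l < 1 / (real (Nf \<tau>) * \<tau>\<^sup>2)) (at_right 0)"
    using ev_pos by eventually_elim (rule order.strict_trans2[OF l], simp)
next
  fix u :: real assume u: "0 < u"
  define c where "c = 1 - \<xi>"
  have c: "0 < c" using xi by (simp add: c_def)
  obtain \<tau>0 where t0: "0 < \<tau>0" and sm: "\<forall>\<tau> \<theta>s. 0 < \<tau> \<longrightarrow> \<tau> < \<tau>0 \<longrightarrow>
      (\<forall>\<theta>. \<theta> * c * \<tau> - ln (Mg \<theta>) \<le> \<theta>s * c * \<tau> - ln (Mg \<theta>s)) \<longrightarrow> \<theta>s < 2 * u / c"
    using thetas_small[OF nd c, of "2 * u / c"] u c by auto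
  show "eventually (\<lambda>\<tau>. 1 / (real (Nf \<tau>) * \<tau>\<^sup>2) < u) (at_right 0)"
    using ev_pos ev_lt[OF t0]
  proof eventually_elim
    fix \<tau> :: real assume t: "0 < \<tau>" "\<tau> < \<tau>0"
    define ts where "ts = \<theta>s \<tau>"
    have mx: "\<forall>\<theta>. \<theta> * c * \<tau> - ln (Mg \<theta>) \<le> ts * c * \<tau> - ln (Mg ts)"
      using max t unfolding MM c_def ts_def by auto
    have ts: "ts < 2 * u / c" using sm t mx by blast
    define I where "I = ts * c * \<tau> - ln (Mg ts)"
    have I: "0 < I" unfolding I_def by (rule I_pos[OF c t(1) mx])
    have Ile: "I \<le> ts * c * \<tau>" unfolding I_def using ln_Mg_nn[of ts] by simp
    have tcp: "0 < ts * c * \<tau>" using I Ile by simp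
    have lnI: "ln (exp (\<theta>s \<tau> * (1 - \<xi>) * \<tau>) / M (\<theta>s \<tau>)) = I"
    proof -
      have "0 < Mg (\<theta>s \<tau>)" by (rule Mg_pos)
      then show ?thesis unfolding I_def ts_def c_def MM by (simp add: ln_div)
    qed
    have N1: "1 \<le> Nf \<tau>" using Npos t by auto
    have Np: "0 < real (Nf \<tau>)" using N1 by simp
    have l4: "0 \<le> ln (4 / \<xi>)" using xi by simp
    have "2 / (ts * c * \<tau>\<^sup>2) = (2 / \<tau>) / (ts * c * \<tau>)" using t by (simp add: power2_eq_square field_simps)
    also have "\<dots> \<le> (2 / \<tau>) / I" using I Ile t by (intro divide_left_mono) auto
    also have "\<dots> \<le> (ln (4 / \<xi>) + 2 / \<tau>) / I" using I l4 by (intro divide_right_mono) auto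
    also have "\<dots> \<le> real (Nf \<tau>)" using Nb t lnI by auto
    finally have nb: "2 / (ts * c * \<tau>\<^sup>2) \<le> real (Nf \<tau>)" .
    have "0 < ts * c * \<tau> * \<tau>" using tcp t by simp
    then have p2: "0 < 2 / (ts * c * \<tau>\<^sup>2)" by (simp add: power2_eq_square mult.assoc)
    have "2 / (ts * c * \<tau>\<^sup>2) * \<tau>\<^sup>2 \<le> real (Nf \<tau>) * \<tau>\<^sup>2" using nb by (intro mult_right_mono) auto
    then have "1 / (real (Nf \<tau>) * \<tau>\<^sup>2) \<le> 1 / (2 / (ts * c * \<tau>\<^sup>2) * \<tau>\<^sup>2)"
      using p2 t Np by (intro divide_left_mono mult_pos_pos) auto
    also have "\<dots> = ts * c / 2" using t tcp by (simp add: field_simps power2_eq_square)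
    also have "\<dots> < u" using ts c by (simp add: field_simps)
    finally show "1 / (real (Nf \<tau>) * \<tau>\<^sup>2) < u" .
  qed
qed

end

lemma ev_pos': "eventually (\<lambda>\<tau>::real. 0 < \<tau>) (at_right 0)"
  by (rule eventually_at_right_less)

lemma exp_neg_lim:
  assumes c: "c < 0"
  shows "((\<lambda>\<tau>::real. exp (c / \<tau>)) \<longlongrightarrow> 0) (at_right 0)"
proof (rule tendsto_sandwich[where f="\<lambda>_. 0" and h="\<lambda>\<tau>. \<tau> / (- c)"])
  show "eventually (\<lambda>\<tau>. 0 \<le> exp (c / \<tau>)) (at_right 0)" by simp
  show "eventually (\<lambda>\<tau>. exp (c / \<tau>) \<le> \<tau> / (- c)) (at_right 0)"
    using ev_pos'
  proof eventually_elim
    fix \<tau> :: real assume t: "0 < \<tau>"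
    define u where "u = - c / \<tau>"
    have u: "0 < u" unfolding u_def using t c by (intro divide_pos_pos) auto
    have "u < exp u" using exp_gt_self .
    then have "1 / exp u \<le> 1 / u" using u by (intro divide_left_mono) auto
    moreover have "exp (c / \<tau>) = 1 / exp u" unfolding u_def by (simp add: exp_minus divide_inverse)
    moreover have "1 / u = \<tau> / (- c)" unfolding u_def using t c by simp
    ultimately show "exp (c / \<tau>) \<le> \<tau> / (- c)" by simp
  qed
  show "((\<lambda>_. 0) \<longlongrightarrow> (0::real)) (at_right 0)" by simp
  have "((\<lambda>\<tau>::real. \<tau> / (- c)) \<longlongrightarrow> 0 / (- c)) (at_right 0)"
    by (intro tendsto_intros) (use c in auto)
  then show "((\<lambda>\<tau>. \<tau> / (- c)) \<longlongrightarrow> 0) (at_right 0)" by simp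
qed

lemma limit_part:
  fixes X :: "'s set" and \<phi> :: "'s \<Rightarrow> real" and pis :: "real \<Rightarrow> 's \<Rightarrow> real" and Kc :: "real \<Rightarrow> real"
  assumes fin: "finite X" and le1: "\<forall>a\<in>X. \<phi> a \<le> 1" and mx: "\<exists>a\<in>X. \<phi> a = 1"
    and Kc1: "\<forall>\<tau>>0. 1 \<le> Kc \<tau>" and Klim: "(Kc \<longlongrightarrow> 1) (at_right 0)"
    and dist: "\<forall>\<tau>>0. (\<forall>a\<in>X. 0 \<le> pis \<tau> a) \<and> (\<Sum>a\<in>X. pis \<tau> a) = 1"
    and bound: "\<forall>\<tau>>0. \<forall>x\<in>X. \<forall>y\<in>X. pis \<tau> x * exp (\<phi> y / \<tau>) \<le> Kc \<tau> * (pis \<tau> y * exp (\<phi> x / \<tau>))"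
  shows "\<forall>a\<in>X. stoch_stable pis a \<longleftrightarrow> (\<forall>b\<in>X. \<phi> b \<le> \<phi> a)"
proof
  fix a assume a: "a \<in> X"
  obtain a0 where a0: "a0 \<in> X" "\<phi> a0 = 1" using mx by blast
  have bd1: "pis \<tau> y \<le> Kc \<tau> * pis \<tau> x * exp ((\<phi> y - \<phi> x) / \<tau>)"
    if t: "0 < \<tau>" and x: "x \<in> X" and y: "y \<in> X" for \<tau> x y
  proof -
    have "pis \<tau> y * exp (\<phi> x / \<tau>) \<le> Kc \<tau> * (pis \<tau> x * exp (\<phi> y / \<tau>))"
      using bound t x y by blast
    then have "pis \<tau> y * exp (\<phi> x / \<tau>) / exp (\<phi> x / \<tau>) \<le> Kc \<tau> * (pis \<tau> x * exp (\<phi> y / \<tau>)) / exp (\<phi> x / \<tau>)"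
      by (intro divide_right_mono) auto
    moreover have "exp (\<phi> y / \<tau>) / exp (\<phi> x / \<tau>) = exp ((\<phi> y - \<phi> x) / \<tau>)"
      by (simp add: exp_diff[symmetric] diff_divide_distrib)
    moreover have "Kc \<tau> * (pis \<tau> x * exp (\<phi> y / \<tau>)) / exp (\<phi> x / \<tau>)
        = Kc \<tau> * (pis \<tau> x * (exp (\<phi> y / \<tau>) / exp (\<phi> x / \<tau>)))"
      by (simp only: times_divide_eq_right)
    ultimately show ?thesis by (simp add: mult.assoc)
  qed
  show "stoch_stable pis a \<longleftrightarrow> (\<forall>b\<in>X. \<phi> b \<le> \<phi> a)"
  proof
    assume ss: "stoch_stable pis a"
    then obtain L where L: "0 < L" "((\<lambda>\<tau>. pis \<tau> a) \<longlongrightarrow> L) (at_right 0)"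
      unfolding stoch_stable_def by blast
    show "\<forall>b\<in>X. \<phi> b \<le> \<phi> a"
    proof (rule ccontr)
      assume "\<not> (\<forall>b\<in>X. \<phi> b \<le> \<phi> a)"
      then have lt: "\<phi> a < 1" using le1 by force
      have z: "((\<lambda>\<tau>. pis \<tau> a) \<longlongrightarrow> 0) (at_right 0)"
      proof (rule tendsto_sandwich[where f="\<lambda>_. 0" and h="\<lambda>\<tau>. Kc \<tau> * exp ((\<phi> a - 1) / \<tau>)"])
        show "eventually (\<lambda>\<tau>. 0 \<le> pis \<tau> a) (at_right 0)"
          using ev_pos' by eventually_elim (use dist a in auto)
        show "eventually (\<lambda>\<tau>. pis \<tau> a \<le> Kc \<tau> * exp ((\<phi> a - 1) / \<tau>)) (at_right 0)"
          using ev_pos'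
        proof eventually_elim
          fix \<tau> :: real assume t: "0 < \<tau>"
          have p1: "pis \<tau> a0 \<le> 1"
          proof -
            have "pis \<tau> a0 \<le> (\<Sum>a\<in>X. pis \<tau> a)" using dist t a0 fin by (intro member_le_sum) auto
            then show ?thesis using dist t by simp
          qed
          have "pis \<tau> a \<le> Kc \<tau> * pis \<tau> a0 * exp ((\<phi> a - \<phi> a0) / \<tau>)" by (rule bd1[OF t a0(1) a])
          also have "\<dots> \<le> Kc \<tau> * 1 * exp ((\<phi> a - \<phi> a0) / \<tau>)"
            using p1 Kc1 t by (intro mult_right_mono mult_left_mono) auto
          finally show "pis \<tau> a \<le> Kc \<tau> * exp ((\<phi> a - 1) / \<tau>)" using a0 by simp
        qed
        show "((\<lambda>_. 0) \<longlongrightarrow> (0::real)) (at_right 0)" by simp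
        have "((\<lambda>\<tau>. Kc \<tau> * exp ((\<phi> a - 1) / \<tau>)) \<longlongrightarrow> 1 * 0) (at_right 0)"
          by (intro tendsto_mult Klim exp_neg_lim) (use lt in simp)
        then show "((\<lambda>\<tau>. Kc \<tau> * exp ((\<phi> a - 1) / \<tau>)) \<longlongrightarrow> 0) (at_right 0)" by simp
      qed
      have "L = 0" using tendsto_unique[OF trivial_limit_at_right_real L(2) z] .
      then show False using L by simp
    qed
  next
    assume amax: "\<forall>b\<in>X. \<phi> b \<le> \<phi> a"
    have pa1: "\<phi> a = 1" using amax a0 le1 a by force
    define Sf where "Sf = (\<lambda>\<tau>. \<Sum>y\<in>X. exp ((\<phi> y - 1) / \<tau>))"
    define m where "m = (\<Sum>y\<in>X. if \<phi> y = 1 then 1 else (0::real))"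
    have m: "1 \<le> m"
    proof -
      have "(\<Sum>y\<in>X. if \<phi> y = 1 then 1 else (0::real)) \<ge> (if \<phi> a = 1 then 1 else 0)"
        using fin a by (intro member_le_sum) auto
      then show ?thesis using pa1 by (simp add: m_def)
    qed
    have Slim: "(Sf \<longlongrightarrow> m) (at_right 0)"
      unfolding Sf_def m_def
    proof (intro tendsto_sum)
      fix y assume y: "y \<in> X"
      show "((\<lambda>\<tau>. exp ((\<phi> y - 1) / \<tau>)) \<longlongrightarrow> (if \<phi> y = 1 then 1 else 0)) (at_right 0)"
      proof (cases "\<phi> y = 1")
        case True then show ?thesis by simp
      next
        case False
        then have "\<phi> y - 1 < 0" using le1 y by force
        then show ?thesis using exp_neg_lim False by simp
      qed
    qed
    have Spos: "0 < Sf \<tau>" for \<tau>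
    proof -
      have "0 < exp ((\<phi> a - 1) / \<tau>)" by simp
      also have "\<dots> \<le> Sf \<tau>" unfolding Sf_def using fin a by (intro member_le_sum) auto
      finally show ?thesis .
    qed
    have low: "eventually (\<lambda>\<tau>. 1 / (Kc \<tau> * Sf \<tau>) \<le> pis \<tau> a) (at_right 0)"
      using ev_pos'
    proof eventually_elim
      fix \<tau> :: real assume t: "0 < \<tau>"
      have "1 = (\<Sum>y\<in>X. pis \<tau> y)" using dist t by simp
      also have "\<dots> \<le> (\<Sum>y\<in>X. Kc \<tau> * pis \<tau> a * exp ((\<phi> y - 1) / \<tau>))"
        using bd1[OF t a] pa1 by (intro sum_mono) auto
      also have "\<dots> = Kc \<tau> * Sf \<tau> * pis \<tau> a" unfolding Sf_def by (simp add: sum_distrib_left algebra_simps)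
      finally have "1 \<le> Kc \<tau> * Sf \<tau> * pis \<tau> a" .
      moreover have "0 < Kc \<tau> * Sf \<tau>"
      proof -
        have "1 \<le> Kc \<tau>" using Kc1 t by blast
        then show ?thesis using Spos[of \<tau>] by (intro mult_pos_pos) auto
      qed
      ultimately show "1 / (Kc \<tau> * Sf \<tau>) \<le> pis \<tau> a" by (simp add: divide_le_eq mult.commute)
    qed
    have up: "eventually (\<lambda>\<tau>. pis \<tau> a \<le> Kc \<tau> / Sf \<tau>) (at_right 0)"
      using ev_pos'
    proof eventually_elim
      fix \<tau> :: real assume t: "0 < \<tau>"
      have "pis \<tau> a * Sf \<tau> = (\<Sum>y\<in>X. pis \<tau> a * exp ((\<phi> y - 1) / \<tau>))"
        unfolding Sf_def by (simp add: sum_distrib_left)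
      also have "\<dots> \<le> (\<Sum>y\<in>X. Kc \<tau> * pis \<tau> y)"
      proof (rule sum_mono)
        fix y assume y: "y \<in> X"
        have "pis \<tau> a * exp (\<phi> y / \<tau>) \<le> Kc \<tau> * (pis \<tau> y * exp (\<phi> a / \<tau>))" using bound t a y by blast
        then have "pis \<tau> a * exp (\<phi> y / \<tau>) / exp (1 / \<tau>) \<le> Kc \<tau> * pis \<tau> y"
          using pa1 by (simp add: divide_le_eq mult.assoc)
        moreover have eq: "exp (\<phi> y / \<tau>) / exp (1 / \<tau>) = exp ((\<phi> y - 1) / \<tau>)"
          by (simp add: exp_diff[symmetric] diff_divide_distrib)
        moreover have "pis \<tau> a * exp (\<phi> y / \<tau>) / exp (1 / \<tau>) = pis \<tau> a * exp ((\<phi> y - 1) / \<tau>)"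
          unfolding eq[symmetric] by (simp only: times_divide_eq_right)
        ultimately show "pis \<tau> a * exp ((\<phi> y - 1) / \<tau>) \<le> Kc \<tau> * pis \<tau> y" by linarith
      qed
      also have "\<dots> = Kc \<tau>" using dist t by (simp add: sum_distrib_left[symmetric])
      finally show "pis \<tau> a \<le> Kc \<tau> / Sf \<tau>" using Spos[of \<tau>] by (simp add: le_divide_eq)
    qed
    have "((\<lambda>\<tau>. pis \<tau> a) \<longlongrightarrow> 1 / m) (at_right 0)"
    proof (rule tendsto_sandwich[OF low up])
      have "((\<lambda>\<tau>. 1 / (Kc \<tau> * Sf \<tau>)) \<longlongrightarrow> 1 / (1 * m)) (at_right 0)"
        by (intro tendsto_intros Klim Slim) (use m in simp)
      then show "((\<lambda>\<tau>. 1 / (Kc \<tau> * Sf \<tau>)) \<longlongrightarrow> 1 / m) (at_right 0)" by simp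
      have "((\<lambda>\<tau>. Kc \<tau> / Sf \<tau>) \<longlongrightarrow> 1 / m) (at_right 0)"
        by (intro tendsto_intros Klim Slim) (use m in simp)
      then show "((\<lambda>\<tau>. Kc \<tau> / Sf \<tau>) \<longlongrightarrow> 1 / m) (at_right 0)" .
    qed
    then show "stoch_stable pis a" unfolding stoch_stable_def using m
      by (intro exI[of _ "1 / m"]) auto
  qed
qed

lemma bounded_int:
  fixes \<nu> :: "real measure"
  assumes nu: "prob_space \<nu>" "sets \<nu> = sets borel"
    and ae: "AE \<eta> in \<nu>. c \<le> \<eta> \<and> \<eta> \<le> c + ell"
  shows "integrable \<nu> (\<lambda>\<eta>. \<eta>) \<and> (\<forall>\<theta>. integrable \<nu> (\<lambda>\<eta>. exp (\<theta> * \<eta>)))"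
proof -
  interpret prob_space \<nu> by (rule nu(1))
  have m: "f \<in> borel_measurable \<nu>" if "f \<in> borel_measurable borel" for f :: "real \<Rightarrow> real"
    using that unfolding measurable_cong_sets[OF nu(2) refl] .
  define B where "B = \<bar>c\<bar> + \<bar>ell\<bar>"
  have ab: "AE \<eta> in \<nu>. \<bar>\<eta>\<bar> \<le> B"
    using ae by (rule AE_mp) (rule AE_I2, auto simp: B_def)
  have i1: "integrable \<nu> (\<lambda>\<eta>. \<eta>)"
    by (rule integrable_const_bound[where B=B]) (use ab m[of "\<lambda>x. x"] in auto)
  have ie: "integrable \<nu> (\<lambda>\<eta>. exp (\<theta> * \<eta>))" for \<theta>
  proof (rule integrable_const_bound[where B="exp (\<bar>\<theta>\<bar> * B)"])
    show "AE \<eta> in \<nu>. norm (exp (\<theta> * \<eta>)) \<le> exp (\<bar>\<theta>\<bar> * B)"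
    proof (rule AE_mp[OF ab], rule AE_I2, rule impI)
      fix \<eta> :: real assume h: "\<bar>\<eta>\<bar> \<le> B"
      have "\<theta> * \<eta> \<le> \<bar>\<theta>\<bar> * \<bar>\<eta>\<bar>" by (metis abs_ge_self abs_mult)
      also have "\<dots> \<le> \<bar>\<theta>\<bar> * B" using h by (intro mult_left_mono) auto
      finally show "norm (exp (\<theta> * \<eta>)) \<le> exp (\<bar>\<theta>\<bar> * B)" by simp
    qed
    show "(\<lambda>\<eta>. exp (\<theta> * \<eta>)) \<in> borel_measurable \<nu>" by (rule m) simp
  qed
  show ?thesis using i1 ie by blast
qed

context blla
begin

lemma nd_prob:
  fixes U :: "'p \<Rightarrow> ('p \<Rightarrow> 'b) \<Rightarrow> real"
  assumes a: "a \<in> profiles Xs" and b: "b \<in> profiles Xs"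
  shows "prob_space (noise_dist S U i a b) \<and> sets (noise_dist S U i a b) = sets borel"
proof -
  have Sa: "prob_space (S i a)" "sets (S i a) = sets borel" using sp a by auto
  have Sb: "prob_space (S i b)" "sets (S i b) = sets borel" using sp b by auto
  have mm: "(\<lambda>(y, z). y - z - (U i a - U i b)) \<in> measurable (S i a \<Otimes>\<^sub>M S i b) borel"
    unfolding measurable_cong_sets[OF sets_pair_measure_cong[OF Sa(2) Sb(2)] refl] by measurable
  show ?thesis unfolding noise_dist_def
    using prob_space.prob_space_distr[OF prob_space_pair[OF Sa(1) Sb(1)] mm] by simp
qed

end

theorem theorem1:
  fixes Xs :: "'p::finite \<Rightarrow> 'b set"
    and U :: "'p \<Rightarrow> ('p \<Rightarrow> 'b) \<Rightarrow> real"
    and phi :: "('p \<Rightarrow> 'b) \<Rightarrow> real"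
    and S :: "'p \<Rightarrow> ('p \<Rightarrow> 'b) \<Rightarrow> real measure"
    and Nf :: "real \<Rightarrow> nat"
    and pis :: "real \<Rightarrow> ('p \<Rightarrow> 'b) \<Rightarrow> real"
    and \<xi> ell :: real
    and M :: "real \<Rightarrow> real"
    and \<theta>s :: "real \<Rightarrow> real"
  assumes fin: "\<forall>i. finite (Xs i) \<and> Xs i \<noteq> {}"
    and pot: "is_potential_game Xs U phi"
    and norm: "\<forall>a\<in>profiles Xs. 0 \<le> phi a \<and> phi a \<le> 1"
    and norm_max: "\<exists>a\<in>profiles Xs. phi a = 1"
    and samples: "\<forall>i. \<forall>a\<in>profiles Xs. prob_space (S i a) \<and> sets (S i a) = sets borel
                    \<and> integrable (S i a) (\<lambda>y. y) \<and> (\<integral>y. y \<partial>S i a) = U i a"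
    and Npos: "\<forall>tau>0. 1 \<le> Nf tau"
    and xi: "0 < \<xi>" "\<xi> < 1"
    and cases:
      "(  (\<forall>i. \<forall>a\<in>profiles Xs. \<forall>x\<in>Xs i. x \<noteq> a i \<longrightarrow>
             (\<exists>c. AE \<eta> in noise_dist S U i a (a(i := x)). c \<le> \<eta> \<and> \<eta> \<le> c + ell))
        \<and> (\<forall>tau>0. real (Nf tau) \<ge>
             (ln (4 / \<xi>) + 2 / tau) * ell\<^sup>2 / (2 * (1 - \<xi>)\<^sup>2 * tau\<^sup>2)))
     \<or>
       (  (\<forall>i. \<forall>a\<in>profiles Xs. \<forall>x\<in>Xs i. x \<noteq> a i \<longrightarrow>
             integrable (noise_dist S U i a (a(i := x))) (\<lambda>\<eta>. \<eta>)
           \<and> integrable (noise_dist S U i a (a(i := x))) (\<lambda>\<eta>. \<eta>\<^sup>2)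
           \<and> (\<forall>\<theta>. integrable (noise_dist S U i a (a(i := x))) (\<lambda>\<eta>. exp (\<theta> * \<eta>))
                 \<and> (\<integral>\<eta>. exp (\<theta> * \<eta>) \<partial>noise_dist S U i a (a(i := x))) = M \<theta>))
        \<and> (\<forall>tau>0. \<forall>\<theta>. \<theta> * (1 - \<xi>) * tau - ln (M \<theta>)
                         \<le> \<theta>s tau * (1 - \<xi>) * tau - ln (M (\<theta>s tau)))
        \<and> (\<forall>tau>0. real (Nf tau) \<ge>
             (ln (4 / \<xi>) + 2 / tau)
               / ln (exp (\<theta>s tau * (1 - \<xi>) * tau) / M (\<theta>s tau))))"
    and stat: "\<forall>tau>0. stationary_dist (profiles Xs) (blla_trans Xs S tau (Nf tau)) (pis tau)"
  shows "\<forall>a\<in>profiles Xs. stoch_stable pis a \<longleftrightarrow> (\<forall>b\<in>profiles Xs. phi b \<le> phi a)"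
proof -
  interpret B: blla Xs S
    by unfold_locales (use fin samples in auto)
  define X where "X = profiles Xs"
  have finX: "finite X" unfolding X_def by (rule B.finX)
  define Pr where "Pr = (SIGMA i:(UNIV::'p set). SIGMA a:X. Xs i - {a i})"
  have finPr: "finite Pr" unfolding Pr_def using finX fin by (intro finite_SigmaI) auto
  define nu where "nu = (\<lambda>q::'p \<times> ('p \<Rightarrow> 'b) \<times> 'b.
      noise_dist S U (fst q) (fst (snd q)) ((fst (snd q))(fst q := snd (snd q))))"
  have hnoise: "noise (nu (i, a, x))" if q: "(i, a, x) \<in> Pr" for i a x
  proof -
    have a: "a \<in> X" and x: "x \<in> Xs i" and xne: "x \<noteq> a i" using q unfolding Pr_def by auto
    have b: "a(i := x) \<in> X" unfolding X_def using prof_upd a x X_def by auto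
    have pr: "prob_space (noise_dist S U i a (a(i := x))) \<and> sets (noise_dist S U i a (a(i := x))) = sets borel"
      using B.nd_prob a b unfolding X_def by blast
    have ints: "integrable (noise_dist S U i a (a(i := x))) (\<lambda>\<eta>. \<eta>) \<and>
        (\<forall>\<theta>. integrable (noise_dist S U i a (a(i := x))) (\<lambda>\<eta>. exp (\<theta> * \<eta>)))"
    proof (rule disjE[OF assms(9)])
      assume c1: "(\<forall>i. \<forall>a\<in>profiles Xs. \<forall>x\<in>Xs i. x \<noteq> a i \<longrightarrow>
             (\<exists>c. AE \<eta> in noise_dist S U i a (a(i := x)). c \<le> \<eta> \<and> \<eta> \<le> c + ell))
        \<and> (\<forall>tau>0. real (Nf tau) \<ge>
             (ln (4 / \<xi>) + 2 / tau) * ell\<^sup>2 / (2 * (1 - \<xi>)\<^sup>2 * tau\<^sup>2))"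
      then obtain c where "AE \<eta> in noise_dist S U i a (a(i := x)). c \<le> \<eta> \<and> \<eta> \<le> c + ell"
        using a x xne unfolding X_def by blast
      then show ?thesis using bounded_int pr by blast
    next
      assume c2: "(\<forall>i. \<forall>a\<in>profiles Xs. \<forall>x\<in>Xs i. x \<noteq> a i \<longrightarrow>
             integrable (noise_dist S U i a (a(i := x))) (\<lambda>\<eta>. \<eta>)
           \<and> integrable (noise_dist S U i a (a(i := x))) (\<lambda>\<eta>. \<eta>\<^sup>2)
           \<and> (\<forall>\<theta>. integrable (noise_dist S U i a (a(i := x))) (\<lambda>\<eta>. exp (\<theta> * \<eta>))
                 \<and> (\<integral>\<eta>. exp (\<theta> * \<eta>) \<partial>noise_dist S U i a (a(i := x))) = M \<theta>))
        \<and> (\<forall>tau>0. \<forall>\<theta>. \<theta> * (1 - \<xi>) * tau - ln (M \<theta>)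
                         \<le> \<theta>s tau * (1 - \<xi>) * tau - ln (M (\<theta>s tau)))
        \<and> (\<forall>tau>0. real (Nf tau) \<ge>
             (ln (4 / \<xi>) + 2 / tau)
               / ln (exp (\<theta>s tau * (1 - \<xi>) * tau) / M (\<theta>s tau)))"
      then show ?thesis using a x xne unfolding X_def by blast
    qed
    have "noise (noise_dist S U i a (a(i := x)))"
      by (rule B.noise_pair[of a "a(i := x)" U i]) (use a b ints samples in \<open>auto simp: X_def\<close>)
    then show ?thesis unfolding nu_def by simp
  qed
  define rate where "rate = ((\<lambda>\<tau>. 1 / (real (Nf \<tau>) * \<tau>\<^sup>2)) \<longlongrightarrow> 0) (at_right 0)"
  have hrate: "(AE \<eta> in nu q. \<eta> = 0) \<or> rate" if q: "q \<in> Pr" for q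
  proof -
    obtain i a x where qq: "q = (i, a, x)" by (cases q) auto
    have a: "a \<in> X" and x: "x \<in> Xs i" and xne: "x \<noteq> a i" using q qq unfolding Pr_def by auto
    interpret nz: noise "nu q" using hnoise q qq by simp
    have nuq: "nu q = noise_dist S U i a (a(i := x))" unfolding nu_def qq by simp
    show ?thesis
    proof (rule disjE[OF assms(9)])
      assume c1: "(\<forall>i. \<forall>a\<in>profiles Xs. \<forall>x\<in>Xs i. x \<noteq> a i \<longrightarrow>
             (\<exists>c. AE \<eta> in noise_dist S U i a (a(i := x)). c \<le> \<eta> \<and> \<eta> \<le> c + ell))
        \<and> (\<forall>tau>0. real (Nf tau) \<ge>
             (ln (4 / \<xi>) + 2 / tau) * ell\<^sup>2 / (2 * (1 - \<xi>)\<^sup>2 * tau\<^sup>2))"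
      show ?thesis
      proof (cases "0 < ell")
        case True
        have rate unfolding rate_def by (rule rate_case1[OF True xi(1) xi(2) Npos]) (use c1 in blast)
        then show ?thesis by blast
      next
        case False
        obtain c where ae: "AE \<eta> in nu q. c \<le> \<eta> \<and> \<eta> \<le> c + ell"
          using c1 a x xne unfolding X_def nuq by blast
        have aec: "AE \<eta> in nu q. \<eta> = c"
          by (rule AE_mp[OF ae]) (rule AE_I2, use False in auto)
        have "(\<integral>\<eta>. \<eta> \<partial>nu q) = (\<integral>\<eta>. c \<partial>nu q)" by (rule integral_cong_AE) (use aec in auto)
        also have "\<dots> = c" using nz.nu by (simp add: prob_space.prob_space)
        finally have "c = 0" using nz.mean0 by simp
        then have "AE \<eta> in nu q. \<eta> = 0" using aec by simp
        then show ?thesis by blast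
      qed
    next
      assume c2: "(\<forall>i. \<forall>a\<in>profiles Xs. \<forall>x\<in>Xs i. x \<noteq> a i \<longrightarrow>
             integrable (noise_dist S U i a (a(i := x))) (\<lambda>\<eta>. \<eta>)
           \<and> integrable (noise_dist S U i a (a(i := x))) (\<lambda>\<eta>. \<eta>\<^sup>2)
           \<and> (\<forall>\<theta>. integrable (noise_dist S U i a (a(i := x))) (\<lambda>\<eta>. exp (\<theta> * \<eta>))
                 \<and> (\<integral>\<eta>. exp (\<theta> * \<eta>) \<partial>noise_dist S U i a (a(i := x))) = M \<theta>))
        \<and> (\<forall>tau>0. \<forall>\<theta>. \<theta> * (1 - \<xi>) * tau - ln (M \<theta>)
                         \<le> \<theta>s tau * (1 - \<xi>) * tau - ln (M (\<theta>s tau)))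
        \<and> (\<forall>tau>0. real (Nf tau) \<ge>
             (ln (4 / \<xi>) + 2 / tau)
               / ln (exp (\<theta>s tau * (1 - \<xi>) * tau) / M (\<theta>s tau)))"
      have MM: "M \<theta> = nz.Mg \<theta>" for \<theta>
      proof -
        have "(\<integral>\<eta>. exp (\<theta> * \<eta>) \<partial>noise_dist S U i a (a(i := x))) = M \<theta>"
          using c2 a x xne unfolding X_def by blast
        moreover have "nz.Mg \<theta> = (\<integral>\<eta>. exp (\<theta> * \<eta>) \<partial>nu q)" by (simp add: nz.Mg_def)
        ultimately show ?thesis using nuq by simp
      qed
      have nd: "\<not> (AE \<eta> in nu q. \<eta> = 0)"
      proof
        assume "AE \<eta> in nu q. \<eta> = 0"
        then have M1: "M \<theta> = 1" for \<theta> using nz.Mg_degen MM by simp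
        have mxall: "\<forall>tau>0. \<forall>\<theta>. \<theta> * (1 - \<xi>) * tau - ln (M \<theta>)
                         \<le> \<theta>s tau * (1 - \<xi>) * tau - ln (M (\<theta>s tau))" using c2 by blast
        have "(\<theta>s 1 + 1) * (1 - \<xi>) * 1 - ln (M (\<theta>s 1 + 1)) \<le> \<theta>s 1 * (1 - \<xi>) * 1 - ln (M (\<theta>s 1))"
          using mxall[rule_format, of 1 "\<theta>s 1 + 1"] by simp
        then show False using xi M1 by (simp add: algebra_simps)
      qed
      have rate unfolding rate_def
        by (rule nz.rate_case2[OF nd xi(1) xi(2) Npos MM, where \<theta>s=\<theta>s]) (use c2 in blast)+
      then show ?thesis by blast
    qed
  qed
  define Kp where "Kp = (\<lambda>\<tau> q. noise.Mg (nu q) (- 1 / (real (Nf \<tau>) * \<tau>)) ^ Nf \<tau>)"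
  define K where "K = (\<lambda>\<tau>. 1 + (\<Sum>q\<in>Pr. max 0 (Kp \<tau> q - 1)))"
  have K1: "1 \<le> K \<tau>" for \<tau> unfolding K_def by (simp add: sum_nonneg)
  have KpK: "Kp \<tau> q \<le> K \<tau>" if "q \<in> Pr" for \<tau> q
  proof -
    have "max 0 (Kp \<tau> q - 1) \<le> (\<Sum>q\<in>Pr. max 0 (Kp \<tau> q - 1))"
      using finPr that by (intro member_le_sum) auto
    then show ?thesis unfolding K_def by linarith
  qed
  have Klim: "(K \<longlongrightarrow> 1) (at_right 0)"
  proof -
    have "((\<lambda>\<tau>. \<Sum>q\<in>Pr. max 0 (Kp \<tau> q - 1)) \<longlongrightarrow> 0) (at_right 0)"
    proof (rule tendsto_null_sum)
      fix q assume q: "q \<in> Pr"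
      obtain i a x where qq: "q = (i, a, x)" by (cases q) auto
      interpret nz: noise "nu q" using hnoise q qq by simp
      show "((\<lambda>\<tau>. max 0 (Kp \<tau> q - 1)) \<longlongrightarrow> 0) (at_right 0)"
      proof (cases "AE \<eta> in nu q. \<eta> = 0")
        case True
        then show ?thesis unfolding Kp_def using nz.term_degen[OF True] by simp
      next
        case False
        then have rate using hrate q by blast
        then show ?thesis unfolding Kp_def rate_def by (rule nz.term_lim[OF Npos])
      qed
    qed
    then have "((\<lambda>\<tau>. 1 + (\<Sum>q\<in>Pr. max 0 (Kp \<tau> q - 1))) \<longlongrightarrow> 1 + 0) (at_right 0)"
      by (intro tendsto_add tendsto_const)
    then show ?thesis unfolding K_def by simp
  qed
  define n where "n = card X"
  define Kc where "Kc = (\<lambda>\<tau>. K \<tau> ^ (2 ^ n))"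
  have Kc1: "\<forall>\<tau>>0. 1 \<le> Kc \<tau>" unfolding Kc_def using K1 by simp
  have Kclim: "(Kc \<longlongrightarrow> 1) (at_right 0)" unfolding Kc_def using tendsto_power[OF Klim, of "2 ^ n"] by simp
  have bound: "\<forall>\<tau>>0. \<forall>x\<in>X. \<forall>y\<in>X. pis \<tau> x * exp (phi y / \<tau>) \<le> Kc \<tau> * (pis \<tau> y * exp (phi x / \<tau>))"
  proof (intro allI impI ballI)
    fix \<tau> :: real and x y assume t: "0 < \<tau>" and x: "x \<in> X" and y: "y \<in> X"
    have N1: "1 \<le> Nf \<tau>" using Npos t by blast
    have st: "stationary_dist X (blla_trans Xs S \<tau> (Nf \<tau>)) (pis \<tau>)" using assms(10) t unfolding X_def by blast
    have pairf: "\<And>i a' x'. a' \<in> profiles Xs \<Longrightarrow> x' \<in> Xs i \<Longrightarrow> x' \<noteq> a' i \<Longrightarrow>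
        exp (phi a' / \<tau>) * switch_prob S \<tau> (Nf \<tau>) i a' (a'(i := x'))
        \<le> K \<tau> * (exp (phi (a'(i := x')) / \<tau>) * switch_prob S \<tau> (Nf \<tau>) i (a'(i := x')) a')"
    proof -
      fix i a' x' assume a': "a' \<in> profiles Xs" and x': "x' \<in> Xs i" and xne: "x' \<noteq> a' i"
      have q: "(i, a', x') \<in> Pr" using a' x' xne unfolding Pr_def X_def by auto
      have nz: "noise (noise_dist S U i a' (a'(i := x')))" using hnoise[OF q] unfolding nu_def by simp
      have b': "a'(i := x') \<in> profiles Xs" by (rule prof_upd[OF a' x'])
      have nn: "0 \<le> exp (phi (a'(i := x')) / \<tau>) * switch_prob S \<tau> (Nf \<tau>) i (a'(i := x')) a'"
        using B.sp_props[OF b' a', of \<tau> "Nf \<tau>" i] by simp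
      have "exp (phi a' / \<tau>) * switch_prob S \<tau> (Nf \<tau>) i a' (a'(i := x'))
          \<le> Kp \<tau> (i, a', x') * (exp (phi (a'(i := x')) / \<tau>) * switch_prob S \<tau> (Nf \<tau>) i (a'(i := x')) a')"
        unfolding Kp_def nu_def using B.pair_bound[OF a' x' assms(2) nz t N1] by simp
      also have "\<dots> \<le> K \<tau> * (exp (phi (a'(i := x')) / \<tau>) * switch_prob S \<tau> (Nf \<tau>) i (a'(i := x')) a')"
        using KpK[OF q] nn by (intro mult_right_mono) auto
      finally show "exp (phi a' / \<tau>) * switch_prob S \<tau> (Nf \<tau>) i a' (a'(i := x'))
        \<le> K \<tau> * (exp (phi (a'(i := x')) / \<tau>) * switch_prob S \<tau> (Nf \<tau>) i (a'(i := x')) a')" .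
    qed
    have Knn: "0 \<le> K \<tau>" using K1[of \<tau>] by linarith
    have bal: "\<forall>a\<in>X. \<forall>b\<in>X. a \<noteq> b \<longrightarrow> exp (phi a / \<tau>) * blla_trans Xs S \<tau> (Nf \<tau>) a b
        \<le> K \<tau> * (exp (phi b / \<tau>) * blla_trans Xs S \<tau> (Nf \<tau>) b a)"
      using B.kcond[OF Knn pairf] unfolding X_def by blast
    have nnP: "\<forall>a\<in>X. \<forall>b\<in>X. 0 \<le> blla_trans Xs S \<tau> (Nf \<tau>) a b"
      using B.trans_nonneg unfolding X_def by blast
    have rows: "\<forall>a\<in>X. (\<Sum>b\<in>X. blla_trans Xs S \<tau> (Nf \<tau>) a b) = 1"
      using B.row_sum unfolding X_def by blast
    have conn: "\<forall>a\<in>X. \<forall>b\<in>X. (a, b) \<in> (edgs X (blla_trans Xs S \<tau> (Nf \<tau>)))\<^sup>*"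
      using B.conn unfolding X_def by blast
    have pnn: "\<forall>a\<in>X. 0 \<le> pis \<tau> a" and pst: "\<forall>b\<in>X. (\<Sum>a\<in>X. pis \<tau> a * blla_trans Xs S \<tau> (Nf \<tau>) a b) = pis \<tau> b"
      using st unfolding stationary_dist_def by auto
    have "pis \<tau> x * exp (phi y / \<tau>) \<le> K \<tau> ^ (2 ^ card X) * (pis \<tau> y * exp (phi x / \<tau>))"
      by (rule tree_bound[OF finX refl nnP rows _ K1 bal conn pnn pst x y]) simp
    then show "pis \<tau> x * exp (phi y / \<tau>) \<le> Kc \<tau> * (pis \<tau> y * exp (phi x / \<tau>))"
      unfolding Kc_def n_def .
  qed
  have le1: "\<forall>a\<in>X. phi a \<le> 1" using norm unfolding X_def by blast
  have mx: "\<exists>a\<in>X. phi a = 1" using norm_max unfolding X_def by blast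
  have dist: "\<forall>\<tau>>0. (\<forall>a\<in>X. 0 \<le> pis \<tau> a) \<and> (\<Sum>a\<in>X. pis \<tau> a) = 1"
    using assms(10) unfolding stationary_dist_def X_def by blast
  show ?thesis using limit_part[OF finX le1 mx Kc1 Kclim dist bound] unfolding X_def .
qed

end
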